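(* Fix a set size $m\ge1$, a population CDF $F$ and a point $t$. For $r=1,\dots,m$ let $Y_{(r)}^{1},\dots,Y_{(r)}^{n_r}$ be the measured units of the $r$-th stratum of a MinPNS sample obtained under perfect ranking, all observations mutually independent, those in stratum $r$ identically distributed with CDF $\mathbb{B}_{(r)}(F(t))$, where $\mathbb{B}_{(r)}(x)=\frac1r\sum_{i=1}^r\mathbb{B}(x,i,m+1-i)$. Let $y_{(r)}^+=\sum_{j=1}^{n_r}\mathbb{I}(Y_{(r)}^j\le t)$ and let \[F_{ml}(t)=\arg\max_{p\in[0,1]}\sum_{r=1}^m\Big[\log\binom{n_r}{y^+_{(r)}}+y^+_{(r)}\log\mathbb{B}_{(r)}(p)+(n_r-y^+_{(r)})\log\big(1-\mathbb{B}_{(r)}(p)\big)\Big].\] If $n_r\to\infty$ for each $r$ such that $n=\sum_r n_r\to\infty$, $n_r/n\to\lambda_r\in(0,1)$ and $\sum_{r=1}^m\lambda_r=1$, then $\sqrt n\,(F_{ml}(t)-F(t))$ converges in distribution to a normal distribution with mean zero and variance \[\sigma_{ml}^2=\Big(\sum_{r=1}^m\lambda_r\frac{\beta_{(r)}^2(F(t))}{\mathbb{B}_{(r)}(F(t))\big(1-\mathbb{B}_{(r)}(F(t))\big)}\Big)^{-1},\] where $\beta_{(r)}(x)=\mathbb{B}_{(r)}'(x)=\frac1r\sum_{i=1}^r\beta(x,i,m+1-i)$.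
   Context: $\mathbb{B}(x,i,m+1-i)=\int_0^x i\binom{m}{i}u^{i-1}(1-u)^{m-i}\,du$ is the Beta$(i,m+1-i)$ CDF at $x$ and $\beta(x,i,m+1-i)$ is the corresponding Beta density at $x$; $\mathbb{I}$ is the indicator function. MinPNS (minimum partial nomination sampling): $n$ independent sets of $m$ units are drawn; in each set the unit judged smallest is measured, but the ranker may declare it tied with other units, in which case one tied unit is chosen at random; a measured unit is in stratum $r$ if exactly $r$ units (including itself) were declared tied for smallest in its set. Perfect ranking means the tied units are exactly the $r$ smallest units of the set, so the measured unit is a uniformly random one of the $r$ smallest order statistics of $m$ i.i.d. draws from $F$; the stratum sizes $n_r$ are treated as given. *)

theory Defs
  imports "HOL-Probability.Probability"
begin

text \<open>Beta(i, m+1-i) density at x.\<close>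
definition beta_dens :: "nat \<Rightarrow> nat \<Rightarrow> real \<Rightarrow> real" where
  "beta_dens m i x = real i * real (m choose i) * x ^ (i - 1) * (1 - x) ^ (m - i)"

definition beta_cdf :: "nat \<Rightarrow> nat \<Rightarrow> real \<Rightarrow> real" where
  "beta_cdf m i x = integral {0..x} (beta_dens m i)"

definition Bmix :: "nat \<Rightarrow> nat \<Rightarrow> real \<Rightarrow> real" where
  "Bmix m r x = (1 / real r) * (\<Sum>i = 1..r. beta_cdf m i x)"

definition bmix :: "nat \<Rightarrow> nat \<Rightarrow> real \<Rightarrow> real" where
  "bmix m r x = (1 / real r) * (\<Sum>i = 1..r. beta_dens m i x)"

definition minpns_lik :: "nat \<Rightarrow> (nat \<Rightarrow> nat) \<Rightarrow> (nat \<Rightarrow> nat) \<Rightarrow> real \<Rightarrow> real" where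
  "minpns_lik m nr y p =
     (\<Prod>r = 1..m. real (nr r choose y r) * Bmix m r p ^ y r * (1 - Bmix m r p) ^ (nr r - y r))"

definition sigma_ml_sq :: "nat \<Rightarrow> (nat \<Rightarrow> real) \<Rightarrow> real \<Rightarrow> real" where
  "sigma_ml_sq m lam x =
     inverse (\<Sum>r = 1..m. lam r * (bmix m r x)\<^sup>2 / (Bmix m r x * (1 - Bmix m r x)))"

end

theory Submission
  imports Defs
begin


definition bdens' :: "nat \<Rightarrow> nat \<Rightarrow> real \<Rightarrow> real" where
  "bdens' m i x = real i * real (m choose i) *
     (real (i - 1) * x ^ (i - 1 - 1) * (1 - x) ^ (m - i) - x ^ (i - 1) * (real (m - i) * (1 - x) ^ (m - i - 1)))"

definition bmix' :: "nat \<Rightarrow> nat \<Rightarrow> real \<Rightarrow> real" where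
  "bmix' m r x = (1 / real r) * (\<Sum>i = 1..r. bdens' m i x)"

lemma beta_dens_deriv: "(beta_dens m i has_real_derivative bdens' m i x) (at x)"
  unfolding beta_dens_def[abs_def] bdens'_def
  by (auto intro!: derivative_eq_intros simp: algebra_simps)

lemma beta_dens_cont[continuous_intros]: "continuous_on S (beta_dens m i)"
  unfolding beta_dens_def[abs_def] by (intro continuous_intros)

lemma beta_dens_isCont: "isCont (beta_dens m i) x"
  unfolding beta_dens_def[abs_def] by (intro continuous_intros)

lemma bdens'_cont: "isCont (bdens' m i) x"
  unfolding bdens'_def by (intro continuous_intros)

lemma bmix_deriv: "(bmix m r has_real_derivative bmix' m r x) (at x)"
  unfolding bmix_def[abs_def] bmix'_def
  by (intro DERIV_cmult DERIV_sum) (auto intro: beta_dens_deriv)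

lemma bmix'_cont: "isCont (bmix' m r) x"
  unfolding bmix'_def by (intro continuous_intros bdens'_cont)

lemma bmix_cont: "isCont (bmix m r) x"
  unfolding bmix_def[abs_def] by (intro continuous_intros beta_dens_isCont)

lemma beta_dens_nonneg: "0 \<le> x \<Longrightarrow> x \<le> 1 \<Longrightarrow> 0 \<le> beta_dens m i x"
  unfolding beta_dens_def by auto

lemma beta_dens_pos: "1 \<le> i \<Longrightarrow> i \<le> m \<Longrightarrow> 0 < x \<Longrightarrow> x < 1 \<Longrightarrow> 0 < beta_dens m i x"
  unfolding beta_dens_def by auto

lemma beta_cdf_deriv:
  assumes "0 < x" "x < 1"
  shows "(beta_cdf m i has_real_derivative beta_dens m i x) (at x)"
proof -
  have "((\<lambda>x. integral {0..x} (beta_dens m i)) has_real_derivative beta_dens m i x) (at x within {0..1})"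
    using assms by (intro integral_has_real_derivative beta_dens_cont) auto
  moreover have "at x within {0..1} = at x"
    using assms by (intro at_within_interior) auto
  ultimately show ?thesis unfolding beta_cdf_def[abs_def] by simp
qed

lemma beta_cdf_cont: "continuous_on {0..1} (beta_cdf m i)"
  unfolding beta_cdf_def[abs_def]
  by (intro indefinite_integral_continuous_1 integrable_continuous_interval beta_dens_cont)

lemma Bmix_deriv:
  assumes "0 < x" "x < 1"
  shows "(Bmix m r has_real_derivative bmix m r x) (at x)"
  unfolding Bmix_def[abs_def] bmix_def
  by (intro DERIV_cmult DERIV_sum) (auto intro: beta_cdf_deriv assms)

lemma Bmix_cont: "continuous_on {0..1} (Bmix m r)"
  unfolding Bmix_def[abs_def] by (intro continuous_intros beta_cdf_cont)

lemma Bmix_isCont: "0 < x \<Longrightarrow> x < 1 \<Longrightarrow> isCont (Bmix m r) x"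
  using Bmix_deriv DERIV_isCont by blast

lemma bmix_pos:
  assumes "1 \<le> r" "r \<le> m" "0 < x" "x < 1"
  shows "0 < bmix m r x"
proof -
  have "0 < (\<Sum>i = 1..r. beta_dens m i x)"
    using assms by (intro sum_pos) (auto intro!: beta_dens_pos)
  then show ?thesis unfolding bmix_def using assms by simp
qed

lemma Bmix_strict_mono:
  assumes "1 \<le> r" "r \<le> m" "0 \<le> a" "a < b" "b \<le> 1"
  shows "Bmix m r a < Bmix m r b"
proof (rule DERIV_pos_imp_increasing_open[OF \<open>a < b\<close>])
  fix x assume "a < x" "x < b"
  then show "\<exists>y. (Bmix m r has_real_derivative y) (at x) \<and> 0 < y"
    using assms by (intro exI[of _ "bmix m r x"]) (auto intro!: Bmix_deriv bmix_pos)
next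
  show "continuous_on {a..b} (Bmix m r)"
    using assms by (intro continuous_on_subset[OF Bmix_cont]) auto
qed

lemma Bmix_mono:
  assumes "1 \<le> r" "r \<le> m" "0 \<le> a" "a \<le> b" "b \<le> 1"
  shows "Bmix m r a \<le> Bmix m r b"
  using Bmix_strict_mono[OF assms(1,2,3) _ assms(5)] assms(4)
  by (cases "a = b") auto

lemma Bmix_0: "Bmix m r 0 = 0"
  unfolding Bmix_def beta_cdf_def by simp


definition phi :: "real \<Rightarrow> real \<Rightarrow> complex" where
  "phi q v = complex_of_real q * iexp (v * (1 - q)) + complex_of_real (1 - q) * iexp (- (v * q))"

lemma T2: "(\<Sum>k\<le>2. (\<i> * complex_of_real x)^k / fact k) = 1 + \<i> * x - complex_of_real (x\<^sup>2 / 2)"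
  by (simp add: numeral_2_eq_2 power2_eq_square field_simps)

lemma phi_approx:
  assumes q: "0 \<le> q" "q \<le> 1"
  shows "cmod (phi q v - complex_of_real (1 - v\<^sup>2 * (q * (1 - q)) / 2)) \<le> \<bar>v\<bar>^3 / 6"
proof -
  define a where "a = v * (1 - q)"
  define b where "b = - (v * q)"
  define T where "T x = 1 + \<i> * complex_of_real x - complex_of_real (x\<^sup>2 / 2)" for x
  have ea: "cmod (iexp a - T a) \<le> \<bar>a\<bar>^3 / 6"
    using iexp_approx1[of a 2] unfolding T2 T_def by (simp add: numeral_3_eq_3)
  have eb: "cmod (iexp b - T b) \<le> \<bar>b\<bar>^3 / 6"
    using iexp_approx1[of b 2] unfolding T2 T_def by (simp add: numeral_3_eq_3)
  have comb: "complex_of_real q * T a + complex_of_real (1 - q) * T b = complex_of_real (1 - v\<^sup>2 * (q * (1 - q)) / 2)"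
    unfolding T_def a_def b_def by (simp add: complex_eq_iff power2_eq_square) (simp add: field_simps)
  have "phi q v - complex_of_real (1 - v\<^sup>2 * (q * (1 - q)) / 2)
      = complex_of_real q * (iexp a - T a) + complex_of_real (1 - q) * (iexp b - T b)"
    unfolding comb[symmetric] phi_def a_def b_def by (simp add: algebra_simps)
  also have "cmod \<dots> \<le> q * (\<bar>a\<bar>^3 / 6) + (1 - q) * (\<bar>b\<bar>^3 / 6)"
  proof (intro order.trans[OF norm_triangle_ineq] add_mono)
    show "cmod (complex_of_real q * (iexp a - T a)) \<le> q * (\<bar>a\<bar>^3 / 6)"
      unfolding norm_mult using q ea by (simp del: of_real_diff) (metis mult.assoc mult_left_mono)
    show "cmod (complex_of_real (1 - q) * (iexp b - T b)) \<le> (1 - q) * (\<bar>b\<bar>^3 / 6)"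
      unfolding norm_mult norm_of_real using q eb by (simp del: of_real_diff) (metis diff_ge_0_iff_ge mult.assoc mult_left_mono)
  qed
  also have "\<dots> \<le> q * (\<bar>v\<bar>^3 / 6) + (1 - q) * (\<bar>v\<bar>^3 / 6)"
  proof -
    have "\<bar>a\<bar> \<le> \<bar>v\<bar>" "\<bar>b\<bar> \<le> \<bar>v\<bar>" using q unfolding a_def b_def
      by (auto simp: abs_mult intro!: mult_left_le)
    then have "\<bar>a\<bar>^3 \<le> \<bar>v\<bar>^3" "\<bar>b\<bar>^3 \<le> \<bar>v\<bar>^3" by (auto intro!: power_mono)
    then show ?thesis using q by (intro add_mono mult_left_mono) auto
  qed
  also have "\<dots> = \<bar>v\<bar>^3 / 6" by (simp add: field_simps)
  finally show ?thesis .
qed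

lemma norm_phi: "0 \<le> q \<Longrightarrow> q \<le> 1 \<Longrightarrow> cmod (phi q v) \<le> 1"
  unfolding phi_def
  by (rule order.trans[OF norm_triangle_ineq]) (simp add: norm_mult del: of_real_diff)


lemma pow_lim:
  fixes n :: "nat \<Rightarrow> nat" and v :: "nat \<Rightarrow> real"
  assumes q: "0 \<le> q" "q \<le> 1" and n: "filterlim n at_top sequentially"
    and L: "(\<lambda>k. real (n k) * (v k)\<^sup>2) \<longlonglongrightarrow> L"
  shows "(\<lambda>k. phi q (v k) ^ n k) \<longlonglongrightarrow> complex_of_real (exp (- (L * (q * (1 - q))) / 2))"
proof -
  define c where "c = q * (1 - q)"
  have c: "0 \<le> c" "c \<le> 1" using q unfolding c_def by (auto intro: mult_le_one)
  have L0: "0 \<le> L"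
    by (rule LIMSEQ_le_const[OF L]) auto
  have nr: "filterlim (\<lambda>k. real (n k)) at_top sequentially"
    by (rule filterlim_compose[OF filterlim_real_sequentially n])
  have inv0: "(\<lambda>k. inverse (real (n k))) \<longlonglongrightarrow> 0"
    by (rule tendsto_inverse_0_at_top[OF nr])
  have evpos: "eventually (\<lambda>k. n k > 0) sequentially"
  proof -
    have "eventually (\<lambda>k. 1 \<le> n k) sequentially" using n by (simp add: filterlim_at_top)
    then show ?thesis by eventually_elim auto
  qed
  have v2: "(\<lambda>k. (v k)\<^sup>2) \<longlonglongrightarrow> 0"
  proof -
    have "(\<lambda>k. real (n k) * (v k)\<^sup>2 * inverse (real (n k))) \<longlonglongrightarrow> L * 0"
      by (intro tendsto_mult L inv0)
    moreover have "eventually (\<lambda>k. real (n k) * (v k)\<^sup>2 * inverse (real (n k)) = (v k)\<^sup>2) sequentially"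
      using evpos by eventually_elim auto
    ultimately show ?thesis by (simp add: tendsto_cong)
  qed
  have av: "(\<lambda>k. \<bar>v k\<bar>) \<longlonglongrightarrow> 0"
  proof -
    have "(\<lambda>k. sqrt ((v k)\<^sup>2)) \<longlonglongrightarrow> sqrt 0" by (intro tendsto_real_sqrt v2)
    then show ?thesis by simp
  qed
  define z where "z k = 1 - (v k)\<^sup>2 * c / 2" for k
  define w where "w k = 1 + (- (L * c) / 2) / real (n k)" for k
  have e3: "(\<lambda>k. w k ^ n k) \<longlonglongrightarrow> exp (- (L * c) / 2)"
    unfolding w_def
    by (rule filterlim_compose[OF tendsto_exp_limit_sequentially n])
  have ev_small: "eventually (\<lambda>k. \<bar>v k\<bar> \<le> 1) sequentially"
    using order_tendstoD(2)[OF av, of 1] by (auto elim: eventually_mono)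
  have ev_big: "eventually (\<lambda>k. real (n k) \<ge> L) sequentially"
    using nr by (simp add: filterlim_at_top)
  have bound: "eventually (\<lambda>k. cmod (phi q (v k) ^ n k - complex_of_real (w k ^ n k))
      \<le> real (n k) * (v k)\<^sup>2 * \<bar>v k\<bar> / 6 + \<bar>real (n k) * (v k)\<^sup>2 * c / 2 - L * c / 2\<bar>) sequentially"
    using ev_small ev_big evpos
  proof eventually_elim
    case (elim k)
    have z1: "\<bar>z k\<bar> \<le> 1"
    proof -
      have "(v k)\<^sup>2 \<le> 1" using elim by (simp add: abs_square_le_1)
      then have "(v k)\<^sup>2 * c \<le> 1" using c by (simp add: mult_le_one)
      then show ?thesis unfolding z_def using c by auto
    qed
    have w1: "\<bar>w k\<bar> \<le> 1"
    proof -
      have np: "0 < real (n k)" using elim by simp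
      have "L * c \<le> L" using c L0 by (simp add: mult_left_le)
      then have b: "L * c / 2 \<le> real (n k)" using elim L0 by linarith
      have a: "0 \<le> L * c / 2 / real (n k)" using L0 c by simp
      have "L * c / 2 / real (n k) \<le> 1" using b np by (simp add: pos_divide_le_eq)
      moreover have "w k = 1 - L * c / 2 / real (n k)" unfolding w_def by simp
      ultimately show ?thesis using a by linarith
    qed
    have "cmod (phi q (v k) ^ n k - complex_of_real (z k) ^ n k) \<le> real (n k) * cmod (phi q (v k) - complex_of_real (z k))"
      by (rule norm_power_diff) (use norm_phi[OF q] z1 in auto)
    also have "\<dots> \<le> real (n k) * (\<bar>v k\<bar>^3 / 6)"
      by (rule mult_left_mono) (use phi_approx[OF q, of "v k"] in \<open>auto simp: z_def c_def\<close>)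
    finally have 1: "cmod (phi q (v k) ^ n k - complex_of_real (z k ^ n k)) \<le> real (n k) * (v k)\<^sup>2 * \<bar>v k\<bar> / 6"
      by (simp add: power2_eq_square power3_eq_cube abs_mult)
    have "\<bar>z k ^ n k - w k ^ n k\<bar> \<le> real (n k) * \<bar>z k - w k\<bar>"
      using norm_power_diff[of "z k" "w k" "n k"] z1 w1 by simp
    also have "real (n k) * \<bar>z k - w k\<bar> = \<bar>real (n k) * (v k)\<^sup>2 * c / 2 - L * c / 2\<bar>"
    proof -
      have "real (n k) * (z k - w k) = L * c / 2 - real (n k) * (v k)\<^sup>2 * c / 2"
        using elim unfolding z_def w_def by (simp add: field_simps)
      then have "\<bar>real (n k) * (z k - w k)\<bar> = \<bar>real (n k) * (v k)\<^sup>2 * c / 2 - L * c / 2\<bar>"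
        by (simp add: abs_minus_commute)
      then show ?thesis by (simp add: abs_mult)
    qed
    finally have 2: "\<bar>z k ^ n k - w k ^ n k\<bar> \<le> \<bar>real (n k) * (v k)\<^sup>2 * c / 2 - L * c / 2\<bar>" .
    have "cmod (phi q (v k) ^ n k - complex_of_real (w k ^ n k))
        \<le> cmod (phi q (v k) ^ n k - complex_of_real (z k ^ n k)) + cmod (complex_of_real (z k ^ n k - w k ^ n k))"
      by (rule order.trans[OF _ norm_triangle_ineq]) simp
    then show ?case using 1 2 by (simp del: of_real_diff of_real_power)
  qed
  have "(\<lambda>k. real (n k) * (v k)\<^sup>2 * \<bar>v k\<bar> / 6 + \<bar>real (n k) * (v k)\<^sup>2 * c / 2 - L * c / 2\<bar>)
        \<longlonglongrightarrow> L * 0 / 6 + \<bar>L * c / 2 - L * c / 2\<bar>"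
    by (intro tendsto_intros L av) auto
  then have "(\<lambda>k. phi q (v k) ^ n k - complex_of_real (w k ^ n k)) \<longlonglongrightarrow> 0"
    by (intro Lim_null_comparison[OF bound]) simp
  moreover have "(\<lambda>k. complex_of_real (w k ^ n k)) \<longlonglongrightarrow> complex_of_real (exp (- (L * c) / 2))"
    by (intro tendsto_intros e3)
  ultimately have "(\<lambda>k. (phi q (v k) ^ n k - complex_of_real (w k ^ n k)) + complex_of_real (w k ^ n k))
      \<longlonglongrightarrow> 0 + complex_of_real (exp (- (L * c) / 2))"
    by (intro tendsto_add)
  then show ?thesis unfolding c_def by simp
qed


locale mp_setup =
  fixes m :: nat and t :: real and q :: "nat \<Rightarrow> real" and nr :: "nat \<Rightarrow> nat \<Rightarrow> nat"
    and lam :: "nat \<Rightarrow> real" and M :: "nat \<Rightarrow> 'a measure"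
    and Y :: "nat \<Rightarrow> nat \<Rightarrow> nat \<Rightarrow> 'a \<Rightarrow> real"
  assumes m1: "m \<ge> 1"
    and M: "\<And>k. prob_space (M k)"
    and indep: "\<And>k. prob_space.indep_vars (M k) (\<lambda>_. borel) (\<lambda>(r, j). Y k r j)
                        {(r, j). r \<in> {1..m} \<and> j < nr k r}"
    and lawt: "\<And>k r j. r \<in> {1..m} \<Longrightarrow> j < nr k r \<Longrightarrow>
                 measure (M k) {\<omega> \<in> space (M k). Y k r j \<omega> \<le> t} = q r"
    and q01: "\<And>r. r \<in> {1..m} \<Longrightarrow> 0 < q r \<and> q r < 1"
    and n_inf: "\<And>r. r \<in> {1..m} \<Longrightarrow> filterlim (\<lambda>k. nr k r) at_top sequentially"
    and lam_lim: "\<And>r. r \<in> {1..m} \<Longrightarrow>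
         (\<lambda>k. real (nr k r) / real (\<Sum>s = 1..m. nr k s)) \<longlonglongrightarrow> lam r"
    and lam_range: "\<And>r. r \<in> {1..m} \<Longrightarrow> 0 < lam r \<and> lam r < 1"
begin

definition X :: "nat \<Rightarrow> nat \<Rightarrow> nat \<Rightarrow> 'a \<Rightarrow> real" where
  "X k r j \<omega> = (if Y k r j \<omega> \<le> t then 1 else 0)"

definition S :: "nat \<Rightarrow> nat \<Rightarrow> 'a \<Rightarrow> real" where
  "S k r \<omega> = (\<Sum>j<nr k r. X k r j \<omega>)"

definition N :: "nat \<Rightarrow> nat" where
  "N k = (\<Sum>s = 1..m. nr k s)"

definition Idx :: "nat \<Rightarrow> (nat \<times> nat) set" where
  "Idx k = Sigma {1..m} (\<lambda>r. {..<nr k r})"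

lemma Idx_eq: "{(r, j). r \<in> {1..m} \<and> j < nr k r} = Idx k"
  unfolding Idx_def by auto

lemma finite_Idx[simp]: "finite (Idx k)"
  unfolding Idx_def by auto

lemma indep': "prob_space.indep_vars (M k) (\<lambda>_. borel) (\<lambda>(r, j). Y k r j) (Idx k)"
  using indep[of k] unfolding Idx_eq .

lemma Y_meas[measurable]:
  assumes "r \<in> {1..m}" "j < nr k r"
  shows "Y k r j \<in> borel_measurable (M k)"
proof -
  interpret prob_space "M k" by (rule M)
  have "(r, j) \<in> Idx k" using assms unfolding Idx_def by auto
  then show ?thesis using indep' [of k] unfolding indep_vars_def2 by auto
qed

lemma X_meas[measurable]:
  assumes "r \<in> {1..m}" "j < nr k r"
  shows "X k r j \<in> borel_measurable (M k)"
  unfolding X_def[abs_def] using Y_meas[OF assms] by measurable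

lemma S_meas[measurable]:
  assumes "r \<in> {1..m}"
  shows "S k r \<in> borel_measurable (M k)"
  unfolding S_def[abs_def] using X_meas[OF assms] by (intro borel_measurable_sum) auto

lemma char_single:
  assumes "r \<in> {1..m}" "j < nr k r"
  shows "char (distr (M k) borel (\<lambda>\<omega>. c * (X k r j \<omega> - q r))) u = phi (q r) (u * c)"
proof -
  interpret prob_space "M k" by (rule M)
  define A where "A = {\<omega> \<in> space (M k). Y k r j \<omega> \<le> t}"
  have A: "A \<in> sets (M k)" unfolding A_def using Y_meas[OF assms] by measurable
  have mA: "measure (M k) A = q r" unfolding A_def by (rule lawt[OF assms])
  define e1 where "e1 = iexp (u * c * (1 - q r))"
  define e0 where "e0 = iexp (- (u * c * q r))"
  have pt: "iexp (u * (c * (X k r j \<omega> - q r))) = e0 + indicator A \<omega> *\<^sub>R (e1 - e0)"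
    if "\<omega> \<in> space (M k)" for \<omega>
    using that unfolding X_def A_def e1_def e0_def indicator_def
    by (auto simp: algebra_simps)
  have "char (distr (M k) borel (\<lambda>\<omega>. c * (X k r j \<omega> - q r))) u
      = (CLINT \<omega>|M k. iexp (u * (c * (X k r j \<omega> - q r))))"
    unfolding char_def using X_meas[OF assms] by (simp add: integral_distr)
  also have "\<dots> = (CLINT \<omega>|M k. e0 + indicator A \<omega> *\<^sub>R (e1 - e0))"
    by (rule Bochner_Integration.integral_cong[OF refl pt])
  also have "\<dots> = e0 + measure (M k) A *\<^sub>R (e1 - e0)"
  proof -
    have int: "integrable (M k) (indicator A :: 'a \<Rightarrow> real)"
      using A by (intro integrable_real_indicator) (auto simp: less_top[symmetric])
    have "A \<inter> space (M k) = A" using A sets.sets_into_space by auto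
    then show ?thesis
      using A int by (subst Bochner_Integration.integral_add) (auto simp: prob_space)
  qed
  also have "\<dots> = phi (q r) (u * c)"
    unfolding mA phi_def e1_def e0_def by (simp add: scaleR_conv_of_real algebra_simps)
  finally show ?thesis .
qed


lemma sum_eq_Idx:
  "(\<Sum>r=1..m. a r * (S k r \<omega> - real (nr k r) * q r) * d)
    = (\<Sum>i\<in>Idx k. (case i of (r, j) \<Rightarrow> a r * d * (X k r j \<omega> - q r)))"
proof -
  have "(\<Sum>r=1..m. a r * (S k r \<omega> - real (nr k r) * q r) * d)
      = (\<Sum>r=1..m. \<Sum>j<nr k r. a r * d * (X k r j \<omega> - q r))"
  proof (rule sum.cong[OF refl])
    fix r
    have "S k r \<omega> - real (nr k r) * q r = (\<Sum>j<nr k r. X k r j \<omega> - q r)"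
      unfolding S_def by (simp add: sum_subtractf)
    then show "a r * (S k r \<omega> - real (nr k r) * q r) * d = (\<Sum>j<nr k r. a r * d * (X k r j \<omega> - q r))"
      by (simp add: sum_distrib_left sum_distrib_right algebra_simps)
  qed
  also have "\<dots> = (\<Sum>(r, j)\<in>Idx k. a r * d * (X k r j \<omega> - q r))"
    unfolding Idx_def by (rule sum.Sigma) auto
  finally show ?thesis by (simp add: case_prod_unfold)
qed

lemma char_sum:
  "char (distr (M k) borel (\<lambda>\<omega>. \<Sum>r=1..m. a r * (S k r \<omega> - real (nr k r) * q r) * d)) u
    = (\<Prod>r=1..m. phi (q r) (u * (a r * d)) ^ nr k r)"
proof -
  interpret prob_space "M k" by (rule M)
  define Z where "Z i \<omega> = (case i of (r, j) \<Rightarrow> a r * d * (X k r j \<omega> - q r))" for i \<omega>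
  have ind: "indep_vars (\<lambda>_. borel) Z (Idx k)"
  proof -
    have "indep_vars (\<lambda>_. borel) (\<lambda>i x. (\<lambda>(r, j) y. a r * d * ((if y \<le> t then 1 else 0) - q r)) i
            ((\<lambda>(r, j). Y k r j) i x)) (Idx k)"
      by (rule indep_vars_compose2[OF indep']) (auto split: prod.splits)
    moreover have "(\<lambda>i x. (\<lambda>(r, j) y. a r * d * ((if y \<le> t then 1 else 0) - q r)) i
            ((\<lambda>(r, j). Y k r j) i x)) = Z"
      by (auto simp: Z_def X_def fun_eq_iff split: prod.splits)
    ultimately show ?thesis by simp
  qed
  have "char (distr (M k) borel (\<lambda>\<omega>. \<Sum>r=1..m. a r * (S k r \<omega> - real (nr k r) * q r) * d)) u
      = char (distr (M k) borel (\<lambda>\<omega>. \<Sum>i\<in>Idx k. Z i \<omega>)) u"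
    unfolding sum_eq_Idx Z_def ..
  also have "\<dots> = (\<Prod>i\<in>Idx k. char (distr (M k) borel (Z i)) u)"
    by (rule char_distr_sum[OF ind])
  also have "\<dots> = (\<Prod>(r, j)\<in>Idx k. phi (q r) (u * (a r * d)))"
  proof (rule prod.cong[OF refl])
    fix i assume i: "i \<in> Idx k"
    then obtain r j where ij: "i = (r, j)" "r \<in> {1..m}" "j < nr k r" unfolding Idx_def by auto
    have "Z i = (\<lambda>\<omega>. (a r * d) * (X k r j \<omega> - q r))" unfolding Z_def ij by simp
    then show "char (distr (M k) borel (Z i)) u = (case i of (r, j) \<Rightarrow> phi (q r) (u * (a r * d)))"
      using char_single[OF ij(2,3)] ij(1) by simp
  qed
  also have "\<dots> = (\<Prod>r=1..m. \<Prod>j<nr k r. phi (q r) (u * (a r * d)))"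
    unfolding Idx_def by (rule prod.Sigma[symmetric]) auto
  also have "\<dots> = (\<Prod>r=1..m. phi (q r) (u * (a r * d)) ^ nr k r)"
    by simp
  finally show ?thesis .
qed


lemma N_ge: "r \<in> {1..m} \<Longrightarrow> nr k r \<le> N k"
  unfolding N_def by (rule member_le_sum) auto

lemma N_inf: "filterlim (\<lambda>k. real (N k)) at_top sequentially"
proof -
  have 1: "1 \<in> {1..m}" using m1 by auto
  have "filterlim (\<lambda>k. real (nr k 1)) at_top sequentially"
    by (rule filterlim_compose[OF filterlim_real_sequentially n_inf[OF 1]])
  then show ?thesis
    by (rule filterlim_at_top_mono) (use N_ge[OF 1] in auto)
qed

lemma ev_N_pos: "eventually (\<lambda>k. 0 < N k) sequentially"
proof -
  have "eventually (\<lambda>k. 1 \<le> real (N k)) sequentially" using N_inf unfolding filterlim_at_top by blast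
  then show ?thesis by eventually_elim auto
qed

lemma clt:
  assumes a: "\<And>r. r \<in> {1..m} \<Longrightarrow> (\<lambda>k. a k r) \<longlonglongrightarrow> \<alpha> r"
    and s: "s = sqrt (\<Sum>r=1..m. (\<alpha> r)\<^sup>2 * lam r * (q r * (1 - q r)))" and spos: "0 < s"
  shows "weak_conv_m (\<lambda>k. distr (M k) borel (\<lambda>\<omega>. \<Sum>r=1..m. a k r * (S k r \<omega> - real (nr k r) * q r) * (1 / (sqrt (N k) * s))))
           std_normal_distribution"
proof (rule levy_continuity)
  fix k
  interpret prob_space "M k" by (rule M)
  show "real_distribution (distr (M k) borel (\<lambda>\<omega>. \<Sum>r=1..m. a k r * (S k r \<omega> - real (nr k r) * q r) * (1 / (sqrt (N k) * s))))"
    by (intro real_distribution_distr borel_measurable_sum) auto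
next
  show "real_distribution std_normal_distribution" by (rule real_dist_normal_dist)
next
  fix u :: real
  define d where "d k = 1 / (sqrt (N k) * s)" for k
  define L where "L r = u\<^sup>2 * (\<alpha> r)\<^sup>2 * lam r / s\<^sup>2" for r
  have fac: "(\<lambda>k. phi (q r) (u * (a k r * d k)) ^ nr k r) \<longlonglongrightarrow> complex_of_real (exp (- (L r * (q r * (1 - q r))) / 2))"
    if r: "r \<in> {1..m}" for r
  proof (rule pow_lim)
    show "0 \<le> q r" "q r \<le> 1" using q01[OF r] by auto
    show "filterlim (\<lambda>k. nr k r) at_top sequentially" by (rule n_inf[OF r])
    have "(\<lambda>k. u\<^sup>2 * (a k r)\<^sup>2 * (real (nr k r) / real (N k)) / s\<^sup>2) \<longlonglongrightarrow> u\<^sup>2 * (\<alpha> r)\<^sup>2 * lam r / s\<^sup>2"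
      using lam_lim[OF r] a[OF r] unfolding N_def by (intro tendsto_intros) (use spos in auto)
    moreover have "eventually (\<lambda>k. u\<^sup>2 * (a k r)\<^sup>2 * (real (nr k r) / real (N k)) / s\<^sup>2
        = real (nr k r) * (u * (a k r * d k))\<^sup>2) sequentially"
      using ev_N_pos
    proof eventually_elim
      case (elim k)
      then show ?case using spos unfolding d_def by (simp add: power2_eq_square field_simps)
    qed
    ultimately show "(\<lambda>k. real (nr k r) * (u * (a k r * d k))\<^sup>2) \<longlonglongrightarrow> L r"
      unfolding L_def by (rule Lim_transform_eventually)
  qed
  have "(\<lambda>k. \<Prod>r=1..m. phi (q r) (u * (a k r * d k)) ^ nr k r)
      \<longlonglongrightarrow> (\<Prod>r=1..m. complex_of_real (exp (- (L r * (q r * (1 - q r))) / 2)))"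
    by (intro tendsto_prod fac) auto
  also have "(\<Prod>r=1..m. complex_of_real (exp (- (L r * (q r * (1 - q r))) / 2)))
      = complex_of_real (exp (\<Sum>r=1..m. - (L r * (q r * (1 - q r))) / 2))"
    by (simp add: exp_sum)
  also have "(\<Sum>r=1..m. - (L r * (q r * (1 - q r))) / 2) = - (u\<^sup>2 / s\<^sup>2) / 2 * (\<Sum>r=1..m. (\<alpha> r)\<^sup>2 * lam r * (q r * (1 - q r)))"
    unfolding sum_distrib_left by (rule sum.cong) (simp_all add: L_def field_simps)
  also have "(\<Sum>r=1..m. (\<alpha> r)\<^sup>2 * lam r * (q r * (1 - q r))) = s\<^sup>2"
  proof -
    have "0 \<le> (\<Sum>r=1..m. (\<alpha> r)\<^sup>2 * lam r * (q r * (1 - q r)))"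
    proof (intro sum_nonneg)
      fix r assume r: "r \<in> {1..m}"
      show "0 \<le> (\<alpha> r)\<^sup>2 * lam r * (q r * (1 - q r))"
        using q01[OF r] lam_range[OF r] by (intro mult_nonneg_nonneg) auto
    qed
    then show ?thesis unfolding s by simp
  qed
  also have "- (u\<^sup>2 / s\<^sup>2) / 2 * s\<^sup>2 = - (u\<^sup>2) / 2" using spos by simp
  finally show "(\<lambda>k. char (distr (M k) borel (\<lambda>\<omega>. \<Sum>r=1..m. a k r * (S k r \<omega> - real (nr k r) * q r) * (1 / (sqrt (N k) * s)))) u)
      \<longlonglongrightarrow> char std_normal_distribution u"
    unfolding char_std_normal_distribution char_sum d_def .
qed

end


abbreviation Phi :: "real \<Rightarrow> real" where
  "Phi \<equiv> cdf std_normal_distribution"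

lemma std_normal_singleton: "measure std_normal_distribution {x} = 0"
proof -
  have "emeasure std_normal_distribution {x} = 0"
    by (subst emeasure_density) (auto intro!: nn_integral_null_set)
  then show ?thesis by (simp add: measure_def)
qed

lemma isCont_Phi: "isCont Phi x"
proof -
  interpret real_distribution std_normal_distribution by (rule real_dist_normal_dist)
  show ?thesis using isCont_cdf std_normal_singleton by simp
qed

lemma Phi_bot: "(Phi \<longlongrightarrow> 0) at_bot"
proof -
  interpret real_distribution std_normal_distribution by (rule real_dist_normal_dist)
  show ?thesis by (rule cdf_lim_at_bot)
qed

lemma Phi_top: "(Phi \<longlongrightarrow> 1) at_top"
proof -
  interpret real_distribution std_normal_distribution by (rule real_dist_normal_dist)
  show ?thesis by (rule cdf_lim_at_top_prob)
qed

lemma Phi_nonneg: "0 \<le> Phi x"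
  unfolding cdf_def by simp

lemma squeeze_cdf:
  fixes F :: "real \<Rightarrow> real" and G :: "nat \<Rightarrow> real" and H :: "nat \<Rightarrow> real \<Rightarrow> real"
  assumes wc: "\<And>x. (\<lambda>k. H k x) \<longlonglongrightarrow> F x" and Fc: "isCont F c"
    and bnd: "\<And>\<eta>. \<eta> > 0 \<Longrightarrow> eventually (\<lambda>k. H k (c - \<eta>) \<le> G k \<and> G k \<le> H k (c + \<eta>)) sequentially"
  shows "G \<longlonglongrightarrow> F c"
proof (rule order_tendstoI)
  fix a assume a: "a < F c"
  have "eventually (\<lambda>x. a < F x) (at c)"
    using Fc a unfolding isCont_def by (rule order_tendstoD)
  then obtain d where d: "d > 0" "\<And>x. x \<noteq> c \<Longrightarrow> dist x c < d \<Longrightarrow> a < F x"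
    unfolding eventually_at by blast
  have "a < F (c - d / 2)" using d by (intro d(2)) (auto simp: dist_real_def)
  then have "eventually (\<lambda>k. a < H k (c - d / 2)) sequentially"
    by (rule order_tendstoD(1)[OF wc])
  moreover have "eventually (\<lambda>k. H k (c - d / 2) \<le> G k \<and> G k \<le> H k (c + d / 2)) sequentially"
    by (rule bnd) (use d in simp)
  ultimately show "eventually (\<lambda>k. a < G k) sequentially"
    by eventually_elim auto
next
  fix a assume a: "F c < a"
  have "eventually (\<lambda>x. F x < a) (at c)"
    using Fc a unfolding isCont_def by (rule order_tendstoD)
  then obtain d where d: "d > 0" "\<And>x. x \<noteq> c \<Longrightarrow> dist x c < d \<Longrightarrow> F x < a"
    unfolding eventually_at by blast
  have "F (c + d / 2) < a" using d by (intro d(2)) (auto simp: dist_real_def)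
  then have "eventually (\<lambda>k. H k (c + d / 2) < a) sequentially"
    by (rule order_tendstoD(2)[OF wc])
  moreover have "eventually (\<lambda>k. H k (c - d / 2) \<le> G k \<and> G k \<le> H k (c + d / 2)) sequentially"
    by (rule bnd) (use d in simp)
  ultimately show "eventually (\<lambda>k. G k < a) sequentially"
    by eventually_elim auto
qed

lemma wc_prob:
  fixes M :: "nat \<Rightarrow> 'a measure" and W :: "nat \<Rightarrow> 'a \<Rightarrow> real"
  assumes M: "\<And>k. prob_space (M k)"
    and wc: "weak_conv_m (\<lambda>k. distr (M k) borel (W k)) std_normal_distribution"
    and Wm: "\<And>k. W k \<in> borel_measurable (M k)" and c: "c' \<longlonglongrightarrow> c"
  shows "(\<lambda>k. measure (M k) {\<omega> \<in> space (M k). W k \<omega> \<le> c' k}) \<longlonglongrightarrow> Phi c"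
    and "(\<lambda>k. measure (M k) {\<omega> \<in> space (M k). W k \<omega> < c' k}) \<longlonglongrightarrow> Phi c"
proof -
  define H where "H k x = measure (M k) {\<omega> \<in> space (M k). W k \<omega> \<le> x}" for k x
  have H: "H k x = cdf (distr (M k) borel (W k)) x" for k x
    unfolding H_def cdf_def using Wm[of k]
    by (subst measure_distr) (auto intro!: arg_cong[where f="measure (M k)"])
  have wc': "(\<lambda>k. H k x) \<longlonglongrightarrow> Phi x" for x
    using wc isCont_Phi unfolding weak_conv_m_def weak_conv_def H by blast
  have mono: "measure (M k) {\<omega> \<in> space (M k). W k \<omega> \<le> x} \<le> measure (M k) {\<omega> \<in> space (M k). W k \<omega> \<le> y}"
    if "x \<le> y" for k x y
  proof -
    interpret prob_space "M k" by (rule M)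
    show ?thesis using that Wm[of k] by (intro finite_measure_mono) auto
  qed
  have mono2: "measure (M k) {\<omega> \<in> space (M k). W k \<omega> < x} \<le> measure (M k) {\<omega> \<in> space (M k). W k \<omega> \<le> y}"
    if "x \<le> y" for k x y
  proof -
    interpret prob_space "M k" by (rule M)
    show ?thesis using that Wm[of k] by (intro finite_measure_mono) auto
  qed
  have mono3: "measure (M k) {\<omega> \<in> space (M k). W k \<omega> \<le> x} \<le> measure (M k) {\<omega> \<in> space (M k). W k \<omega> < y}"
    if "x < y" for k x y
  proof -
    interpret prob_space "M k" by (rule M)
    show ?thesis using that Wm[of k] by (intro finite_measure_mono) auto
  qed
  have evc: "eventually (\<lambda>k. c - \<eta> < c' k \<and> c' k < c + \<eta>) sequentially" if "\<eta> > 0" for \<eta>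
  proof -
    have "eventually (\<lambda>k. c - \<eta> < c' k) sequentially" by (rule order_tendstoD(1)[OF c]) (use that in simp)
    moreover have "eventually (\<lambda>k. c' k < c + \<eta>) sequentially" by (rule order_tendstoD(2)[OF c]) (use that in simp)
    ultimately show ?thesis by eventually_elim auto
  qed
  show "(\<lambda>k. measure (M k) {\<omega> \<in> space (M k). W k \<omega> \<le> c' k}) \<longlonglongrightarrow> Phi c"
  proof (rule squeeze_cdf[OF wc' isCont_Phi])
    fix \<eta> :: real assume "\<eta> > 0"
    from evc[OF this] show "eventually (\<lambda>k. H k (c - \<eta>) \<le> measure (M k) {\<omega> \<in> space (M k). W k \<omega> \<le> c' k}
        \<and> measure (M k) {\<omega> \<in> space (M k). W k \<omega> \<le> c' k} \<le> H k (c + \<eta>)) sequentially"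
      by eventually_elim (auto simp: H_def intro!: mono)
  qed
  show "(\<lambda>k. measure (M k) {\<omega> \<in> space (M k). W k \<omega> < c' k}) \<longlonglongrightarrow> Phi c"
  proof (rule squeeze_cdf[OF wc' isCont_Phi])
    fix \<eta> :: real assume "\<eta> > 0"
    from evc[OF this] show "eventually (\<lambda>k. H k (c - \<eta>) \<le> measure (M k) {\<omega> \<in> space (M k). W k \<omega> < c' k}
        \<and> measure (M k) {\<omega> \<in> space (M k). W k \<omega> < c' k} \<le> H k (c + \<eta>)) sequentially"
      by eventually_elim (auto simp: H_def intro!: mono2 mono3)
  qed
qed


context mp_setup begin

lemma lln:
  assumes r: "r \<in> {1..m}" and e: "\<epsilon> > 0"
  shows "(\<lambda>k. measure (M k) {\<omega> \<in> space (M k). \<epsilon> * real (N k) \<le> \<bar>S k r \<omega> - real (nr k r) * q r\<bar>}) \<longlonglongrightarrow> 0"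
proof -
  define s where "s = sqrt (lam r * (q r * (1 - q r)))"
  have spos: "0 < s" unfolding s_def using q01[OF r] lam_range[OF r] by auto
  define a where "a (k::nat) r' = (if r' = r then 1 else (0::real))" for k r'
  define W where "W k \<omega> = (\<Sum>r'=1..m. a k r' * (S k r' \<omega> - real (nr k r') * q r') * (1 / (sqrt (N k) * s)))" for k \<omega>
  have W_eq: "W k \<omega> = (S k r \<omega> - real (nr k r) * q r) / (sqrt (N k) * s)" for k \<omega>
  proof -
    have "W k \<omega> = (\<Sum>r'\<in>{1..m}. if r' = r then (S k r' \<omega> - real (nr k r') * q r') * (1 / (sqrt (N k) * s)) else 0)"
      unfolding W_def by (rule sum.cong) (auto simp: a_def)
    also have "\<dots> = (S k r \<omega> - real (nr k r) * q r) / (sqrt (N k) * s)"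
      using r by (subst sum.delta) auto
    finally show ?thesis .
  qed
  have Wm: "W k \<in> borel_measurable (M k)" for k
    unfolding W_eq[abs_def] using S_meas[OF r] by measurable
  have ssum: "s = sqrt (\<Sum>r'=1..m. (a 0 r')\<^sup>2 * lam r' * (q r' * (1 - q r')))"
  proof -
    have "(\<Sum>r'=1..m. (a 0 r')\<^sup>2 * lam r' * (q r' * (1 - q r'))) = (\<Sum>r'\<in>{1..m}. if r' = r then lam r' * (q r' * (1 - q r')) else 0)"
      by (rule sum.cong) (auto simp: a_def)
    also have "\<dots> = lam r * (q r * (1 - q r))"
      using r by (subst sum.delta) auto
    finally show ?thesis unfolding s_def by simp
  qed
  have wc: "weak_conv_m (\<lambda>k. distr (M k) borel (W k)) std_normal_distribution"
    unfolding W_def[abs_def] by (rule clt[OF _ ssum spos]) (simp add: a_def)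
  show ?thesis
  proof (rule tendstoI)
    fix e' :: real assume e': "e' > 0"
    have "eventually (\<lambda>x. Phi x < e' / 4) at_bot"
      by (rule order_tendstoD(2)[OF Phi_bot]) (use e' in simp)
    then obtain A0 where A0: "\<And>x. x \<le> A0 \<Longrightarrow> Phi x < e' / 4" unfolding eventually_at_bot_linorder by blast
    have "eventually (\<lambda>x. 1 - e' / 4 < Phi x) at_top"
      by (rule order_tendstoD(1)[OF Phi_top]) (use e' in simp)
    then obtain A1 where A1: "\<And>x. x \<ge> A1 \<Longrightarrow> 1 - e' / 4 < Phi x" unfolding eventually_at_top_linorder by blast
    define A where "A = max 1 (max (- A0) A1)"
    have A: "A > 0" "Phi (- A) < e' / 4" "1 - e' / 4 < Phi A"
    proof -
      show "A > 0" unfolding A_def by auto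
      show "Phi (- A) < e' / 4" by (rule A0) (simp add: A_def)
      show "1 - e' / 4 < Phi A" by (rule A1) (simp add: A_def)
    qed
    have l1: "(\<lambda>k. measure (M k) {\<omega> \<in> space (M k). W k \<omega> \<le> - A}) \<longlonglongrightarrow> Phi (- A)"
      by (rule wc_prob(1)[OF M wc Wm]) simp
    have l2: "(\<lambda>k. measure (M k) {\<omega> \<in> space (M k). W k \<omega> < A}) \<longlonglongrightarrow> Phi A"
      by (rule wc_prob(2)[OF M wc Wm]) simp
    have ev1: "eventually (\<lambda>k. measure (M k) {\<omega> \<in> space (M k). W k \<omega> \<le> - A} < e' / 2) sequentially"
      by (rule order_tendstoD(2)[OF l1]) (use A Phi_nonneg[of "-A"] in simp)
    have ev2: "eventually (\<lambda>k. 1 - e' / 2 < measure (M k) {\<omega> \<in> space (M k). W k \<omega> < A}) sequentially"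
      by (rule order_tendstoD(1)[OF l2]) (use A e' in simp)
    have "filterlim (\<lambda>k. sqrt (real (N k))) at_top sequentially"
      by (rule filterlim_compose[OF sqrt_at_top N_inf])
    then have ev3: "eventually (\<lambda>k. A * s / \<epsilon> \<le> sqrt (real (N k))) sequentially"
      by (simp add: filterlim_at_top)
    show "eventually (\<lambda>k. dist (measure (M k) {\<omega> \<in> space (M k). \<epsilon> * real (N k) \<le> \<bar>S k r \<omega> - real (nr k r) * q r\<bar>}) 0 < e') sequentially"
      using ev1 ev2 ev3 ev_N_pos
    proof eventually_elim
      case (elim k)
      interpret prob_space "M k" by (rule M)
      define E where "E = {\<omega> \<in> space (M k). \<epsilon> * real (N k) \<le> \<bar>S k r \<omega> - real (nr k r) * q r\<bar>}"
      have sub: "E \<subseteq> {\<omega> \<in> space (M k). W k \<omega> \<le> - A} \<union> (space (M k) - {\<omega> \<in> space (M k). W k \<omega> < A})"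
      proof
        fix \<omega> assume \<omega>: "\<omega> \<in> E"
        have sN: "0 < sqrt (real (N k))" using elim by simp
        have "A \<le> \<epsilon> * sqrt (real (N k)) / s"
          using elim(3) e spos by (simp add: field_simps)
        also have "\<epsilon> * sqrt (real (N k)) / s = \<epsilon> * real (N k) / (sqrt (N k) * s)"
        proof -
          have "\<epsilon> * real (N k) / (sqrt (N k) * s) = \<epsilon> * (real (N k) / sqrt (N k)) / s" by simp
          also have "real (N k) / sqrt (N k) = sqrt (N k)" by (simp add: real_div_sqrt)
          finally show ?thesis by simp
        qed
        also have "\<dots> \<le> \<bar>S k r \<omega> - real (nr k r) * q r\<bar> / (sqrt (N k) * s)"
          using \<omega> sN spos unfolding E_def by (intro divide_right_mono) auto
        also have "\<dots> = \<bar>W k \<omega>\<bar>" unfolding W_eq using sN spos by (simp add: abs_mult)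
        finally have "A \<le> \<bar>W k \<omega>\<bar>" .
        then show "\<omega> \<in> {\<omega> \<in> space (M k). W k \<omega> \<le> - A} \<union> (space (M k) - {\<omega> \<in> space (M k). W k \<omega> < A})"
          using \<omega> unfolding E_def by auto
      qed
      have meas1: "{\<omega> \<in> space (M k). W k \<omega> \<le> - A} \<in> sets (M k)" using Wm[of k] by measurable
      have meas2: "{\<omega> \<in> space (M k). W k \<omega> < A} \<in> sets (M k)" using Wm[of k] by measurable
      have "measure (M k) E \<le> measure (M k) ({\<omega> \<in> space (M k). W k \<omega> \<le> - A} \<union> (space (M k) - {\<omega> \<in> space (M k). W k \<omega> < A}))"
        using sub meas1 meas2 by (intro finite_measure_mono) auto
      also have "\<dots> \<le> measure (M k) {\<omega> \<in> space (M k). W k \<omega> \<le> - A} + measure (M k) (space (M k) - {\<omega> \<in> space (M k). W k \<omega> < A})"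
        using meas1 meas2 by (intro measure_subadditive) auto
      also have "measure (M k) (space (M k) - {\<omega> \<in> space (M k). W k \<omega> < A}) = 1 - measure (M k) {\<omega> \<in> space (M k). W k \<omega> < A}"
        using meas2 by (rule prob_compl)
      finally have "measure (M k) E < e'" using elim by linarith
      then show ?case unfolding E_def by simp
    qed
  qed
qed

end


definition gfun :: "nat \<Rightarrow> nat \<Rightarrow> real \<Rightarrow> real" where
  "gfun m r p = bmix m r p / (Bmix m r p * (1 - Bmix m r p))"

definition gfun' :: "nat \<Rightarrow> nat \<Rightarrow> real \<Rightarrow> real" where
  "gfun' m r p = (bmix' m r p * (Bmix m r p - (Bmix m r p)\<^sup>2)
      - bmix m r p * (bmix m r p - 2 * Bmix m r p * bmix m r p)) / (Bmix m r p - (Bmix m r p)\<^sup>2)\<^sup>2"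

definition Lg :: "nat \<Rightarrow> (nat \<Rightarrow> nat) \<Rightarrow> (nat \<Rightarrow> nat) \<Rightarrow> real \<Rightarrow> real" where
  "Lg m n y p = (\<Sum>r=1..m. real (y r) * ln (Bmix m r p) + (real (n r) - real (y r)) * ln (1 - Bmix m r p))"

definition score :: "nat \<Rightarrow> (nat \<Rightarrow> nat) \<Rightarrow> (nat \<Rightarrow> nat) \<Rightarrow> real \<Rightarrow> real" where
  "score m n y p = (\<Sum>r=1..m. gfun m r p * (real (y r) - real (n r) * Bmix m r p))"

definition score' :: "nat \<Rightarrow> (nat \<Rightarrow> nat) \<Rightarrow> (nat \<Rightarrow> nat) \<Rightarrow> real \<Rightarrow> real" where
  "score' m n y p = (\<Sum>r=1..m. gfun' m r p * (real (y r) - real (n r) * Bmix m r p)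
       - real (n r) * (gfun m r p * bmix m r p))"

lemma gfun_deriv:
  assumes p: "0 < p" "p < 1" and B: "0 < Bmix m r p" "Bmix m r p < 1"
  shows "(gfun m r has_real_derivative gfun' m r p) (at p)"
proof -
  have eq: "gfun m r = (\<lambda>p. bmix m r p / (Bmix m r p - (Bmix m r p)\<^sup>2))"
    unfolding gfun_def[abs_def] by (simp add: algebra_simps power2_eq_square)
  have nz: "Bmix m r p - (Bmix m r p)\<^sup>2 \<noteq> 0"
    using B by (simp add: power2_eq_square)
  show ?thesis unfolding eq gfun'_def
    using nz by (auto intro!: derivative_eq_intros bmix_deriv Bmix_deriv p simp: power2_eq_square algebra_simps)
qed

lemma Lg_term_deriv:
  assumes p: "0 < p" "p < 1" and b: "0 < Bmix m r p" "Bmix m r p < 1"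
  shows "((\<lambda>p. a * ln (Bmix m r p) + (c - a) * ln (1 - Bmix m r p)) has_real_derivative
      gfun m r p * (a - c * Bmix m r p)) (at p)"
proof -
  have "((\<lambda>p. a * ln (Bmix m r p) + (c - a) * ln (1 - Bmix m r p)) has_real_derivative
      a * (bmix m r p / Bmix m r p) + (c - a) * (- bmix m r p / (1 - Bmix m r p))) (at p)"
  proof -
    have d1: "((\<lambda>p. ln (Bmix m r p)) has_real_derivative bmix m r p / Bmix m r p) (at p)"
      using DERIV_chain2[OF DERIV_ln_divide Bmix_deriv[OF p]] b by simp
    have d2: "((\<lambda>p. ln (1 - Bmix m r p)) has_real_derivative (- bmix m r p) / (1 - Bmix m r p)) (at p)"
    proof -
      have "((\<lambda>p. 1 - Bmix m r p) has_real_derivative - bmix m r p) (at p)"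
        by (auto intro!: derivative_eq_intros Bmix_deriv p)
      from DERIV_chain2[OF DERIV_ln_divide this] b show ?thesis by simp
    qed
    show ?thesis by (intro DERIV_add DERIV_cmult d1 d2)
  qed
  moreover have "a * (bmix m r p / Bmix m r p) + (c - a) * (- bmix m r p / (1 - Bmix m r p))
      = gfun m r p * (a - c * Bmix m r p)"
    unfolding gfun_def using b by (simp add: field_simps)
  ultimately show ?thesis by simp
qed

lemma Lg_deriv:
  assumes p: "0 < p" "p < 1" and B: "\<And>r. r \<in> {1..m} \<Longrightarrow> 0 < Bmix m r p \<and> Bmix m r p < 1"
  shows "(Lg m n y has_real_derivative score m n y p) (at p)"
  unfolding Lg_def[abs_def] score_def
  by (intro DERIV_sum) (use B in \<open>auto intro!: Lg_term_deriv p\<close>)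

lemma score_term_deriv:
  assumes p: "0 < p" "p < 1" and b: "0 < Bmix m r p" "Bmix m r p < 1"
  shows "((\<lambda>p. gfun m r p * (a - c * Bmix m r p)) has_real_derivative
      gfun' m r p * (a - c * Bmix m r p) - c * (gfun m r p * bmix m r p)) (at p)"
  by (auto intro!: derivative_eq_intros gfun_deriv Bmix_deriv p b simp: algebra_simps)

lemma score_deriv:
  assumes p: "0 < p" "p < 1" and B: "\<And>r. r \<in> {1..m} \<Longrightarrow> 0 < Bmix m r p \<and> Bmix m r p < 1"
  shows "(score m n y has_real_derivative score' m n y p) (at p)"
  unfolding score_def[abs_def] score'_def
  by (intro DERIV_sum) (use B in \<open>auto intro!: score_term_deriv p\<close>)

lemma lik_exp:
  assumes B: "\<And>r. r \<in> {1..m} \<Longrightarrow> 0 < Bmix m r p \<and> Bmix m r p < 1"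
    and y: "\<And>r. r \<in> {1..m} \<Longrightarrow> y r \<le> n r"
  shows "minpns_lik m n y p = (\<Prod>r=1..m. real (n r choose y r)) * exp (Lg m n y p)"
proof -
  have "minpns_lik m n y p = (\<Prod>r=1..m. real (n r choose y r) * exp (real (y r) * ln (Bmix m r p) + (real (n r) - real (y r)) * ln (1 - Bmix m r p)))"
    unfolding minpns_lik_def
  proof (rule prod.cong[OF refl])
    fix r assume r: "r \<in> {1..m}"
    have b: "0 < Bmix m r p" "Bmix m r p < 1" using B[OF r] by auto
    have "exp (real (y r) * ln (Bmix m r p) + (real (n r) - real (y r)) * ln (1 - Bmix m r p))
        = exp (ln (Bmix m r p)) ^ y r * exp (ln (1 - Bmix m r p)) ^ (n r - y r)"
      using y[OF r] by (simp add: exp_add exp_of_nat_mult[symmetric] of_nat_diff)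
    also have "\<dots> = Bmix m r p ^ y r * (1 - Bmix m r p) ^ (n r - y r)" using b by simp
    finally show "real (n r choose y r) * Bmix m r p ^ y r * (1 - Bmix m r p) ^ (n r - y r)
      = real (n r choose y r) * exp (real (y r) * ln (Bmix m r p) + (real (n r) - real (y r)) * ln (1 - Bmix m r p))"
      by simp
  qed
  also have "\<dots> = (\<Prod>r=1..m. real (n r choose y r)) * exp (Lg m n y p)"
    unfolding Lg_def by (simp add: prod.distrib exp_sum)
  finally show ?thesis .
qed


lemma fmono_aux:
  fixes b b' :: real and y' z' :: nat
  assumes "0 \<le> b" "b \<le> b'" "b' * real (Suc y' + Suc z') \<le> real (Suc y')"
  shows "b ^ Suc y' * (1 - b) ^ Suc z' \<le> b' ^ Suc y' * (1 - b') ^ Suc z'"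
proof (rule DERIV_nonneg_imp_nondecreasing[OF assms(2)])
  fix x assume x: "b \<le> x" "x \<le> b'"
  define D where "D = x ^ y' * (1 - x) ^ z' * (real (Suc y') - real (Suc y' + Suc z') * x)"
  have "((\<lambda>x. x ^ Suc y' * (1 - x) ^ Suc z') has_real_derivative D) (at x)"
  proof -
    have "((\<lambda>x. x ^ Suc y' * (1 - x) ^ Suc z') has_real_derivative
        real (Suc y') * x ^ y' * (1 - x) ^ Suc z' + x ^ Suc y' * (real (Suc z') * (1 - x) ^ z' * (- 1))) (at x)"
    proof -
      have d1: "((\<lambda>x. x ^ Suc y') has_real_derivative (1 + real y') * (1 * x ^ y')) (at x)"
        by (rule DERIV_power_Suc[OF DERIV_ident])
      have d0: "((\<lambda>x. 1 - x) has_real_derivative - 1) (at x)"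
        by (auto intro!: derivative_eq_intros)
      have d2: "((\<lambda>x. (1 - x) ^ Suc z') has_real_derivative (1 + real z') * (- 1 * (1 - x) ^ z')) (at x)"
        by (rule DERIV_power_Suc[OF d0])
      note DERIV_mult[OF d1 d2]
      then show ?thesis by (simp add: algebra_simps)
    qed
    moreover have "real (Suc y') * x ^ y' * (1 - x) ^ Suc z' + x ^ Suc y' * (real (Suc z') * (1 - x) ^ z' * (- 1)) = D"
      unfolding D_def by (simp add: algebra_simps)
    ultimately show ?thesis by simp
  qed
  moreover have "0 \<le> D"
  proof -
    have x0: "0 \<le> x" using x assms by auto
    have "x * real (Suc y' + Suc z') \<le> real (Suc y')"
      using x assms(3) by (smt (verit) mult_right_mono of_nat_0_le_iff)
    then have h: "0 \<le> real (Suc y') - real (Suc y' + Suc z') * x" by (simp add: algebra_simps)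
    have "x * real (Suc y' + Suc z') \<le> real (Suc y' + Suc z')"
      using \<open>x * real (Suc y' + Suc z') \<le> real (Suc y')\<close> by linarith
    then have "x \<le> 1" by (simp add: mult_le_cancel_right1 del: of_nat_add)
    then show ?thesis unfolding D_def using x0 h by (intro mult_nonneg_nonneg) auto
  qed
  ultimately show "\<exists>d. ((\<lambda>x. x ^ Suc y' * (1 - x) ^ Suc z') has_real_derivative d) (at x) \<and> 0 \<le> d" by blast
qed

lemma fmono:
  fixes b b' :: real and y n :: nat
  assumes yn: "y \<le> n" and b: "0 \<le> b" "b \<le> b'" and b': "b' * real n \<le> real y"
  shows "b ^ y * (1 - b) ^ (n - y) \<le> b' ^ y * (1 - b') ^ (n - y)"
proof (cases "y = 0")
  case True
  show ?thesis
  proof (cases "n = 0")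
    case True then show ?thesis using \<open>y = 0\<close> by simp
  next
    case False
    then have "b' \<le> 0" using b' \<open>y = 0\<close> by (simp add: mult_le_0_iff)
    then have "b = b'" using b by auto
    then show ?thesis by simp
  qed
next
  case y0: False
  show ?thesis
  proof (cases "y = n")
    case True then show ?thesis using b by (simp add: power_mono)
  next
    case False
    then obtain y' z' where yz: "y = Suc y'" "n - y = Suc z'" using y0 yn
      by (metis Suc_diff_Suc le_neq_implies_less not0_implies_Suc zero_less_diff diff_Suc_Suc)
    have "n = Suc y' + Suc z'" using yz yn by linarith
    then show ?thesis unfolding yz using fmono_aux[of b b' y' z'] b b' yz by simp
  qed
qed

lemma fmono2:
  fixes b b' :: real and y n :: nat
  assumes yn: "y \<le> n" and b: "b' \<le> b" "b \<le> 1" and b': "real y \<le> b' * real n"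
  shows "b ^ y * (1 - b) ^ (n - y) \<le> b' ^ y * (1 - b') ^ (n - y)"
proof -
  have "(1 - b) ^ (n - y) * (1 - (1 - b)) ^ (n - (n - y)) \<le> (1 - b') ^ (n - y) * (1 - (1 - b')) ^ (n - (n - y))"
    by (rule fmono) (use assms in \<open>auto simp: algebra_simps of_nat_diff\<close>)
  then show ?thesis using yn by (simp add: mult.commute)
qed

lemma lik_mono_lo:
  assumes y: "\<And>r. r \<in> {1..m} \<Longrightarrow> y r \<le> n r"
    and B1: "\<And>r. r \<in> {1..m} \<Longrightarrow> Bmix m r 1 \<le> 1"
    and pp: "0 \<le> p" "p \<le> p'" "p' \<le> 1"
    and Bp': "\<And>r. r \<in> {1..m} \<Longrightarrow> Bmix m r p' * real (n r) \<le> real (y r)"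
  shows "minpns_lik m n y p \<le> minpns_lik m n y p'"
  unfolding minpns_lik_def
proof (rule prod_mono)
  fix r assume r: "r \<in> {1..m}"
  then have r1: "1 \<le> r" "r \<le> m" by auto
  have B0: "0 \<le> Bmix m r p" using Bmix_mono[OF r1, of 0 p] pp by (simp add: Bmix_0)
  have Bpp: "Bmix m r p \<le> Bmix m r p'" using Bmix_mono[OF r1, of p p'] pp by simp
  have Bp1: "Bmix m r p \<le> 1" using Bmix_mono[OF r1, of p 1] pp B1[OF r] by simp
  have "Bmix m r p ^ y r * (1 - Bmix m r p) ^ (n r - y r) \<le> Bmix m r p' ^ y r * (1 - Bmix m r p') ^ (n r - y r)"
    by (rule fmono[OF y[OF r] B0 Bpp Bp'[OF r]])
  then show "0 \<le> real (n r choose y r) * Bmix m r p ^ y r * (1 - Bmix m r p) ^ (n r - y r) \<and>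
      real (n r choose y r) * Bmix m r p ^ y r * (1 - Bmix m r p) ^ (n r - y r)
      \<le> real (n r choose y r) * Bmix m r p' ^ y r * (1 - Bmix m r p') ^ (n r - y r)"
    using B0 Bp1 by (auto simp: mult.assoc intro!: mult_left_mono)
qed

lemma lik_mono_hi:
  assumes y: "\<And>r. r \<in> {1..m} \<Longrightarrow> y r \<le> n r"
    and B1: "\<And>r. r \<in> {1..m} \<Longrightarrow> Bmix m r 1 \<le> 1"
    and pp: "0 \<le> p'" "p' \<le> p" "p \<le> 1"
    and Bp': "\<And>r. r \<in> {1..m} \<Longrightarrow> real (y r) \<le> Bmix m r p' * real (n r)"
  shows "minpns_lik m n y p \<le> minpns_lik m n y p'"
  unfolding minpns_lik_def
proof (rule prod_mono)
  fix r assume r: "r \<in> {1..m}"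
  then have r1: "1 \<le> r" "r \<le> m" by auto
  have B0: "0 \<le> Bmix m r p" using Bmix_mono[OF r1, of 0 p] pp by (simp add: Bmix_0)
  have Bpp: "Bmix m r p' \<le> Bmix m r p" using Bmix_mono[OF r1, of p' p] pp by simp
  have Bp1: "Bmix m r p \<le> 1" using Bmix_mono[OF r1, of p 1] pp B1[OF r] by simp
  have "Bmix m r p ^ y r * (1 - Bmix m r p) ^ (n r - y r) \<le> Bmix m r p' ^ y r * (1 - Bmix m r p') ^ (n r - y r)"
    by (rule fmono2[OF y[OF r] Bpp Bp1 Bp'[OF r]])
  then show "0 \<le> real (n r choose y r) * Bmix m r p ^ y r * (1 - Bmix m r p) ^ (n r - y r) \<and>
      real (n r choose y r) * Bmix m r p ^ y r * (1 - Bmix m r p) ^ (n r - y r)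
      \<le> real (n r choose y r) * Bmix m r p' ^ y r * (1 - Bmix m r p') ^ (n r - y r)"
    using B0 Bp1 by (auto simp: mult.assoc intro!: mult_left_mono)
qed


lemma B01:
  assumes r: "r \<in> {1..m}" and B1: "Bmix m r 1 \<le> 1" and p: "0 < p" "p < 1"
  shows "0 < Bmix m r p" "Bmix m r p < 1"
proof -
  have r1: "1 \<le> r" "r \<le> m" using r by auto
  show "0 < Bmix m r p" using Bmix_strict_mono[OF r1, of 0 p] p by (simp add: Bmix_0)
  show "Bmix m r p < 1" using Bmix_strict_mono[OF r1, of p 1] p B1 by simp
qed

lemma gfun'_isCont:
  assumes p: "0 < p" "p < 1" and b: "0 < Bmix m r p" "Bmix m r p < 1"
  shows "isCont (gfun' m r) p"
proof -
  have nz: "(Bmix m r p - (Bmix m r p)\<^sup>2)\<^sup>2 \<noteq> 0"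
    using b by (simp add: power2_eq_square)
  show ?thesis unfolding gfun'_def[abs_def]
    by (intro continuous_intros bmix'_cont bmix_cont Bmix_isCont p nz)
qed

lemma gb_isCont:
  assumes p: "0 < p" "p < 1" and b: "0 < Bmix m r p" "Bmix m r p < 1"
  shows "isCont (\<lambda>p. gfun m r p * bmix m r p) p"
proof -
  have nz: "Bmix m r p * (1 - Bmix m r p) \<noteq> 0" using b by simp
  show ?thesis unfolding gfun_def[abs_def]
    by (intro continuous_intros bmix_cont Bmix_isCont p nz)
qed

lemma gfun_isCont:
  assumes p: "0 < p" "p < 1" and b: "0 < Bmix m r p" "Bmix m r p < 1"
  shows "isCont (gfun m r) p"
proof -
  have nz: "Bmix m r p * (1 - Bmix m r p) \<noteq> 0" using b by simp
  show ?thesis unfolding gfun_def[abs_def]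
    by (intro continuous_intros bmix_cont Bmix_isCont p nz)
qed

lemma local_concave:
  assumes m: "m \<ge> 1" and p0: "0 < p0" "p0 < 1"
    and B1: "\<And>r. r \<in> {1..m} \<Longrightarrow> Bmix m r 1 \<le> 1"
  shows "\<exists>\<delta> \<eta>. 0 < \<delta> \<and> 0 < \<eta> \<and> 0 < p0 - \<delta> \<and> p0 + \<delta> < 1 \<and>
     (\<forall>r\<in>{1..m}. Bmix m r (p0 - \<delta>) < Bmix m r p0 - \<eta> \<and> Bmix m r p0 + \<eta> < Bmix m r (p0 + \<delta>)) \<and>
     (\<forall>n y p. (\<forall>r\<in>{1..m}. 0 < n r \<and> \<bar>real (y r) - real (n r) * Bmix m r p0\<bar> \<le> \<eta> * real (n r))
          \<longrightarrow> \<bar>p - p0\<bar> \<le> \<delta> \<longrightarrow> score' m n y p < 0)"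
proof -
  define q where "q r = Bmix m r p0" for r
  have q: "0 < q r" "q r < 1" if "r \<in> {1..m}" for r
    using B01[OF that B1[OF that] p0] unfolding q_def by auto
  define c where "c r = gfun m r p0 * bmix m r p0" for r
  define K where "K r = \<bar>gfun' m r p0\<bar> + 1" for r
  have c: "0 < c r" if r: "r \<in> {1..m}" for r
  proof -
    have "0 < bmix m r p0" using r p0 by (intro bmix_pos) auto
    then show ?thesis unfolding c_def gfun_def using q[OF r] unfolding q_def by simp
  qed
  have K: "0 < K r" for r unfolding K_def by simp
  define \<eta>0 where "\<eta>0 = Min ((\<lambda>r. c r / (8 * K r)) ` {1..m})"
  have ne: "{1..m} \<noteq> {}" using m by auto
  have \<eta>0: "0 < \<eta>0" unfolding \<eta>0_def using ne c K by (subst Min_gr_iff) auto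
  have \<eta>0c: "\<eta>0 \<le> c r / (8 * K r)" if "r \<in> {1..m}" for r
    unfolding \<eta>0_def using that by (intro Min_le) auto
  define P where "P r p \<longleftrightarrow> \<bar>gfun' m r p\<bar> < K r \<and> \<bar>Bmix m r p - q r\<bar> < \<eta>0 \<and> c r / 2 < gfun m r p * bmix m r p" for r p
  have evP: "eventually (P r) (at p0)" if r: "r \<in> {1..m}" for r
  proof -
    have b: "0 < Bmix m r p0" "Bmix m r p0 < 1" using q[OF r] unfolding q_def by auto
    have t1: "((\<lambda>p. \<bar>gfun' m r p\<bar>) \<longlongrightarrow> \<bar>gfun' m r p0\<bar>) (at p0)"
      using gfun'_isCont[OF p0 b] unfolding isCont_def by (intro tendsto_intros)
    have t2: "((\<lambda>p. \<bar>Bmix m r p - q r\<bar>) \<longlongrightarrow> \<bar>Bmix m r p0 - q r\<bar>) (at p0)"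
      using Bmix_isCont[OF p0] unfolding isCont_def by (intro tendsto_intros)
    have t3: "((\<lambda>p. gfun m r p * bmix m r p) \<longlongrightarrow> c r) (at p0)"
      using gb_isCont[OF p0 b] unfolding isCont_def c_def .
    have e1: "eventually (\<lambda>p. \<bar>gfun' m r p\<bar> < K r) (at p0)"
      by (rule order_tendstoD(2)[OF t1]) (simp add: K_def)
    have e2: "eventually (\<lambda>p. \<bar>Bmix m r p - q r\<bar> < \<eta>0) (at p0)"
      by (rule order_tendstoD(2)[OF t2]) (simp add: q_def \<eta>0)
    have e3: "eventually (\<lambda>p. c r / 2 < gfun m r p * bmix m r p) (at p0)"
      by (rule order_tendstoD(1)[OF t3]) (use c[OF r] in simp)
    show ?thesis using e1 e2 e3 unfolding P_def by eventually_elim auto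
  qed
  have P0: "P r p0" if r: "r \<in> {1..m}" for r
    unfolding P_def using c[OF r] \<eta>0 by (simp add: K_def c_def q_def mult.commute)
  have "eventually (\<lambda>p. \<forall>r\<in>{1..m}. P r p) (at p0)"
    using evP by (subst eventually_ball_finite_distrib) auto
  then obtain d where d: "d > 0" "\<And>p. p \<noteq> p0 \<Longrightarrow> dist p p0 < d \<Longrightarrow> \<forall>r\<in>{1..m}. P r p"
    unfolding eventually_at by blast
  define \<delta> where "\<delta> = min (d / 2) (min (p0 / 2) ((1 - p0) / 2))"
  have \<delta>: "0 < \<delta>" "0 < p0 - \<delta>" "p0 + \<delta> < 1" "\<delta> < d"
  proof -
    have f1: "\<delta> \<le> d / 2" unfolding \<delta>_def by (rule min.cobounded1)
    have f2: "\<delta> \<le> p0 / 2" unfolding \<delta>_def by (intro min.coboundedI2 min.cobounded1)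
    have f3: "\<delta> \<le> (1 - p0) / 2" unfolding \<delta>_def by (intro min.coboundedI2 min.cobounded2)
    have f4: "0 < \<delta>" unfolding \<delta>_def using d p0 by simp
    note facts = f1 f2 f3 f4
    show "0 < \<delta>" using facts by linarith
    show "0 < p0 - \<delta>" using facts p0 by (simp add: field_simps)
    show "p0 + \<delta> < 1" using facts p0 by (simp add: field_simps)
    show "\<delta> < d" using facts d by (simp add: field_simps)
  qed
  have Pd: "P r p" if "\<bar>p - p0\<bar> \<le> \<delta>" "r \<in> {1..m}" for r p
  proof (cases "p = p0")
    case True then show ?thesis using P0 that by simp
  next
    case False then show ?thesis using d(2)[of p] that \<delta> by (auto simp: dist_real_def)
  qed
  define gap where "gap = Min ((\<lambda>r. min (q r - Bmix m r (p0 - \<delta>)) (Bmix m r (p0 + \<delta>) - q r)) ` {1..m})"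
  have gpos: "0 < min (q r - Bmix m r (p0 - \<delta>)) (Bmix m r (p0 + \<delta>) - q r)" if r: "r \<in> {1..m}" for r
  proof -
    have r1: "1 \<le> r" "r \<le> m" using r by auto
    have "Bmix m r (p0 - \<delta>) < q r" unfolding q_def using \<delta> by (intro Bmix_strict_mono[OF r1]) auto
    moreover have "q r < Bmix m r (p0 + \<delta>)" unfolding q_def using \<delta> by (intro Bmix_strict_mono[OF r1]) auto
    ultimately show ?thesis by simp
  qed
  have gap: "0 < gap"
    unfolding gap_def using ne gpos by (subst Min_gr_iff) auto
  have gapr: "gap \<le> q r - Bmix m r (p0 - \<delta>)" "gap \<le> Bmix m r (p0 + \<delta>) - q r" if "r \<in> {1..m}" for r
    using Min_le[of "(\<lambda>r. min (q r - Bmix m r (p0 - \<delta>)) (Bmix m r (p0 + \<delta>) - q r)) ` {1..m}"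
        "min (q r - Bmix m r (p0 - \<delta>)) (Bmix m r (p0 + \<delta>) - q r)"] that
    unfolding gap_def by auto
  define \<eta> where "\<eta> = min \<eta>0 (gap / 2)"
  have \<eta>: "0 < \<eta>" "\<eta> \<le> \<eta>0" "\<eta> < gap" unfolding \<eta>_def using \<eta>0 gap by auto
  show ?thesis
  proof (rule exI[of _ \<delta>], rule exI[of _ \<eta>], intro conjI allI impI ballI)
    show "0 < \<delta>" "0 < \<eta>" "0 < p0 - \<delta>" "p0 + \<delta> < 1" using \<delta> \<eta> by auto
  next
    fix r assume r: "r \<in> {1..m}"
    show "Bmix m r (p0 - \<delta>) < Bmix m r p0 - \<eta>" "Bmix m r p0 + \<eta> < Bmix m r (p0 + \<delta>)"
      using gapr[OF r] \<eta> unfolding q_def by auto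
  next
    fix n y :: "nat \<Rightarrow> nat" and p :: real
    assume H: "\<forall>r\<in>{1..m}. 0 < n r \<and> \<bar>real (y r) - real (n r) * Bmix m r p0\<bar> \<le> \<eta> * real (n r)"
      and pp: "\<bar>p - p0\<bar> \<le> \<delta>"
    have trm: "gfun' m r p * (real (y r) - real (n r) * Bmix m r p) - real (n r) * (gfun m r p * bmix m r p) < 0"
      if r: "r \<in> {1..m}" for r
    proof -
      have Pr: "P r p" by (rule Pd[OF pp r])
      have nr: "0 < real (n r)" using H r by auto
      have y1: "\<bar>real (y r) - real (n r) * q r\<bar> \<le> \<eta>0 * real (n r)"
        using H r \<eta>(2) nr unfolding q_def by (smt (verit) mult_right_mono)
      have y2: "\<bar>real (n r) * q r - real (n r) * Bmix m r p\<bar> \<le> \<eta>0 * real (n r)"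
      proof -
        have "\<bar>real (n r) * q r - real (n r) * Bmix m r p\<bar> = real (n r) * \<bar>Bmix m r p - q r\<bar>"
        proof -
          have "real (n r) * q r - real (n r) * Bmix m r p = real (n r) * (q r - Bmix m r p)" by (simp add: algebra_simps)
          then show ?thesis by (simp add: abs_mult abs_minus_commute)
        qed
        also have "\<dots> \<le> real (n r) * \<eta>0" using Pr nr unfolding P_def by (intro mult_left_mono) auto
        finally show ?thesis by (simp add: mult.commute)
      qed
      have y3: "\<bar>real (y r) - real (n r) * Bmix m r p\<bar> \<le> 2 * \<eta>0 * real (n r)"
        using y1 y2 by linarith
      have "gfun' m r p * (real (y r) - real (n r) * Bmix m r p) \<le> K r * (2 * \<eta>0 * real (n r))"
      proof -
        have "gfun' m r p * (real (y r) - real (n r) * Bmix m r p) \<le> \<bar>gfun' m r p\<bar> * \<bar>real (y r) - real (n r) * Bmix m r p\<bar>"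
          by (metis abs_ge_self abs_mult)
        also have "\<dots> \<le> K r * (2 * \<eta>0 * real (n r))"
          using Pr y3 unfolding P_def by (intro mult_mono) auto
        finally show ?thesis .
      qed
      also have "K r * (2 * \<eta>0 * real (n r)) \<le> K r * (2 * (c r / (8 * K r)) * real (n r))"
        using \<eta>0c[OF r] K[of r] nr by (intro mult_left_mono mult_right_mono) auto
      also have "\<dots> = c r / 4 * real (n r)" using K[of r] by (simp add: field_simps)
      finally have "gfun' m r p * (real (y r) - real (n r) * Bmix m r p) \<le> c r / 4 * real (n r)" .
      moreover have "real (n r) * (c r / 2) \<le> real (n r) * (gfun m r p * bmix m r p)"
        using Pr nr unfolding P_def by (intro mult_left_mono) auto
      moreover have "0 < c r * real (n r)" using c[OF r] nr by simp
      ultimately show ?thesis by (simp add: algebra_simps)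
    qed
    have "score' m n y p < (\<Sum>r=1..m. 0)"
      unfolding score'_def using ne by (intro sum_strict_mono) (use trm in auto)
    then show "score' m n y p < 0" by simp
  qed
qed


lemma argmax_score:
  fixes n y :: "nat \<Rightarrow> nat"
  assumes m: "m \<ge> 1" and B1: "\<And>r. r \<in> {1..m} \<Longrightarrow> Bmix m r 1 \<le> 1"
    and d: "0 < \<delta>" "0 < p0 - \<delta>" "p0 + \<delta> < 1"
    and gapB: "\<And>r. r \<in> {1..m} \<Longrightarrow> Bmix m r (p0 - \<delta>) < Bmix m r p0 - \<eta> \<and> Bmix m r p0 + \<eta> < Bmix m r (p0 + \<delta>)"
    and conc: "\<And>p. \<bar>p - p0\<bar> \<le> \<delta> \<Longrightarrow> score' m n y p < 0"
    and good: "\<And>r. r \<in> {1..m} \<Longrightarrow> 0 < n r \<and> y r \<le> n r \<and> \<bar>real (y r) - real (n r) * Bmix m r p0\<bar> \<le> \<eta> * real (n r)"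
    and p1: "\<bar>p1 - p0\<bar> < \<delta>"
    and F: "0 \<le> F" "F \<le> 1" and Fmax: "\<And>p. 0 \<le> p \<Longrightarrow> p \<le> 1 \<Longrightarrow> minpns_lik m n y p \<le> minpns_lik m n y F"
  shows "score m n y p1 < 0 \<Longrightarrow> F \<le> p1" and "F \<le> p1 \<Longrightarrow> score m n y p1 \<le> 0"
proof -
  define lo where "lo = p0 - \<delta>"
  define hi where "hi = p0 + \<delta>"
  have lohi: "0 < lo" "lo < p1" "p1 < hi" "hi < 1" unfolding lo_def hi_def using d p1 by auto
  have inJ: "\<bar>p - p0\<bar> \<le> \<delta>" if "lo \<le> p" "p \<le> hi" for p using that unfolding lo_def hi_def by auto
  have HB: "0 < Bmix m r p \<and> Bmix m r p < 1" if "lo \<le> p" "p \<le> hi" "r \<in> {1..m}" for p r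
    using B01[OF that(3) B1[OF that(3)], of p] that lohi by auto
  define C where "C = (\<Prod>r=1..m. real (n r choose y r))"
  have C: "0 < C" unfolding C_def using good by (intro prod_pos) auto
  have likJ: "minpns_lik m n y p = C * exp (Lg m n y p)" if "lo \<le> p" "p \<le> hi" for p
    unfolding C_def using HB[OF that] good
    by (intro lik_exp) (auto simp: good)
  have Lg_der: "(Lg m n y has_real_derivative score m n y p) (at p)" if "lo \<le> p" "p \<le> hi" for p
    using HB[OF that] that lohi by (intro Lg_deriv) auto
  have sc_der: "(score m n y has_real_derivative score' m n y p) (at p)" if "lo \<le> p" "p \<le> hi" for p
    using HB[OF that] that lohi by (intro score_deriv) auto
  have score_dec: "score m n y b < score m n y a" if "lo \<le> a" "a < b" "b \<le> hi" for a b
  proof (rule DERIV_neg_imp_decreasing[OF that(2)])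
    fix x assume "a \<le> x" "x \<le> b"
    then have x: "lo \<le> x" "x \<le> hi" using that by auto
    show "\<exists>z. (score m n y has_real_derivative z) (at x) \<and> z < 0" using sc_der[OF x] conc[OF inJ[OF x]] by blast
  qed
  have Lg_dec: "Lg m n y b < Lg m n y a" if "lo \<le> a" "a < b" "b \<le> hi" "\<And>x. a \<le> x \<Longrightarrow> x \<le> b \<Longrightarrow> score m n y x < 0" for a b
  proof (rule DERIV_neg_imp_decreasing[OF that(2)])
    fix x assume x0: "a \<le> x" "x \<le> b"
    then have x: "lo \<le> x" "x \<le> hi" using that by auto
    show "\<exists>z. (Lg m n y has_real_derivative z) (at x) \<and> z < 0" using Lg_der[OF x] that(4)[OF x0] by blast
  qed
  have Lg_inc: "Lg m n y a < Lg m n y b" if "lo \<le> a" "a < b" "b \<le> hi" "\<And>x. a \<le> x \<Longrightarrow> x \<le> b \<Longrightarrow> 0 < score m n y x" for a b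
  proof (rule DERIV_pos_imp_increasing[OF that(2)])
    fix x assume x0: "a \<le> x" "x \<le> b"
    then have x: "lo \<le> x" "x \<le> hi" using that by auto
    show "\<exists>z. (Lg m n y has_real_derivative z) (at x) \<and> 0 < z" using Lg_der[OF x] that(4)[OF x0] by blast
  qed
  have lik_lt: "minpns_lik m n y p < minpns_lik m n y p'"
    if "lo \<le> p" "p \<le> hi" "lo \<le> p'" "p' \<le> hi" "Lg m n y p < Lg m n y p'" for p p'
    unfolding likJ[OF that(1,2)] likJ[OF that(3,4)] using C that(5) by simp
  have lo_mono: "minpns_lik m n y p \<le> minpns_lik m n y lo" if "0 \<le> p" "p \<le> lo" for p
  proof (rule lik_mono_lo[OF _ B1])
    fix r assume r: "r \<in> {1..m}"
    show "y r \<le> n r" using good[OF r] by auto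
    have "Bmix m r lo * real (n r) \<le> (Bmix m r p0 - \<eta>) * real (n r)"
      using gapB[OF r] good[OF r] unfolding lo_def by (intro mult_right_mono) auto
    also have "\<dots> \<le> real (y r)" using good[OF r] by (auto simp: algebra_simps abs_le_iff)
    finally show "Bmix m r lo * real (n r) \<le> real (y r)" .
  qed (use that lohi in auto)
  have hi_mono: "minpns_lik m n y p \<le> minpns_lik m n y hi" if "hi \<le> p" "p \<le> 1" for p
  proof (rule lik_mono_hi[OF _ B1])
    fix r assume r: "r \<in> {1..m}"
    show "y r \<le> n r" using good[OF r] by auto
    have "real (y r) \<le> (Bmix m r p0 + \<eta>) * real (n r)"
      using good[OF r] by (auto simp: algebra_simps abs_le_iff)
    also have "\<dots> \<le> Bmix m r hi * real (n r)"
      using gapB[OF r] good[OF r] unfolding hi_def by (intro mult_right_mono) auto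
    finally show "real (y r) \<le> Bmix m r hi * real (n r)" .
  qed (use that lohi in auto)
  show "F \<le> p1" if neg: "score m n y p1 < 0"
  proof (rule ccontr)
    assume "\<not> F \<le> p1"
    then have Fp: "p1 < F" by simp
    have sneg: "score m n y x < 0" if "p1 \<le> x" "x \<le> hi" for x
    proof (cases "x = p1")
      case True then show ?thesis using neg by simp
    next
      case False then have "p1 < x" using that by simp
      then show ?thesis using score_dec[of p1 x] that lohi neg by simp
    qed
    have "minpns_lik m n y F < minpns_lik m n y p1"
    proof (cases "F \<le> hi")
      case True
      have "Lg m n y F < Lg m n y p1" by (rule Lg_dec) (use Fp True lohi sneg in auto)
      then show ?thesis by (intro lik_lt) (use Fp True lohi in auto)
    next
      case False
      have "minpns_lik m n y F \<le> minpns_lik m n y hi" using False F by (intro hi_mono) auto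
      also have "Lg m n y hi < Lg m n y p1" by (rule Lg_dec) (use lohi sneg in auto)
      then have "minpns_lik m n y hi < minpns_lik m n y p1" by (intro lik_lt) (use lohi in auto)
      finally show ?thesis .
    qed
    moreover have "minpns_lik m n y p1 \<le> minpns_lik m n y F" by (rule Fmax) (use lohi in auto)
    ultimately show False by simp
  qed
  show "score m n y p1 \<le> 0" if Fp: "F \<le> p1"
  proof (rule ccontr)
    assume "\<not> score m n y p1 \<le> 0"
    then have pos: "0 < score m n y p1" by simp
    have spos: "0 < score m n y x" if "lo \<le> x" "x \<le> p1" for x
    proof (cases "x = p1")
      case True then show ?thesis using pos by simp
    next
      case False then have "x < p1" using that by simp
      then show ?thesis using score_dec[of x p1] that lohi pos by simp
    qed
    show False
    proof (cases "F = p1")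
      case True
      have "score m n y p1 = 0"
      proof (rule DERIV_local_max[OF Lg_der])
        show "lo \<le> p1" "p1 \<le> hi" using lohi by auto
        show "0 < min (p1 - lo) (hi - p1)" using lohi by auto
        show "\<forall>z. \<bar>p1 - z\<bar> < min (p1 - lo) (hi - p1) \<longrightarrow> Lg m n y z \<le> Lg m n y p1"
        proof (intro allI impI)
          fix z assume z: "\<bar>p1 - z\<bar> < min (p1 - lo) (hi - p1)"
          then have zJ: "lo \<le> z" "z \<le> hi" by auto
          have "minpns_lik m n y z \<le> minpns_lik m n y p1" using Fmax[of z] True zJ lohi by auto
          then have "C * exp (Lg m n y z) \<le> C * exp (Lg m n y p1)"
          proof -
            have "minpns_lik m n y p1 = C * exp (Lg m n y p1)" by (rule likJ) (use lohi in auto)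
            then show ?thesis using \<open>minpns_lik m n y z \<le> minpns_lik m n y p1\<close> likJ[OF zJ] by simp
          qed
          then show "Lg m n y z \<le> Lg m n y p1" using C by simp
        qed
      qed
      then show False using pos by simp
    next
      case False
      then have Flt: "F < p1" using Fp by simp
      have "minpns_lik m n y F < minpns_lik m n y p1"
      proof (cases "lo \<le> F")
        case True
        have "Lg m n y F < Lg m n y p1" by (rule Lg_inc) (use Flt True lohi spos in auto)
        then show ?thesis by (intro lik_lt) (use Flt True lohi in auto)
      next
        case False
        have "minpns_lik m n y F \<le> minpns_lik m n y lo" using False F by (intro lo_mono) auto
        also have "Lg m n y lo < Lg m n y p1" by (rule Lg_inc) (use lohi spos in auto)
        then have "minpns_lik m n y lo < minpns_lik m n y p1" by (intro lik_lt) (use lohi in auto)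
        finally show ?thesis .
      qed
      moreover have "minpns_lik m n y p1 \<le> minpns_lik m n y F" by (rule Fmax) (use lohi in auto)
      ultimately show False by simp
    qed
  qed
qed


lemma normal_cdf_scale:
  assumes \<sigma>: "0 < \<sigma>"
  shows "cdf (density lborel (normal_density 0 \<sigma>)) x = Phi (x / \<sigma>)"
proof -
  interpret std: prob_space std_normal_distribution by (rule prob_space_normal_density) simp
  have sets_std: "sets std_normal_distribution = sets lborel" by simp
  have d0: "distributed std_normal_distribution lborel (\<lambda>x. x) std_normal_density"
    unfolding distributed_def using distr_id2[OF sets_std[symmetric]] by auto
  have "distributed std_normal_distribution lborel (\<lambda>x. 0 + \<sigma> * x) (normal_density (0 + \<sigma> * 0) (\<bar>\<sigma>\<bar> * 1))"
    by (rule std.normal_density_affine[OF d0]) (use \<sigma> in auto)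
  then have eq: "density lborel (normal_density 0 \<sigma>) = distr std_normal_distribution lborel (\<lambda>x. \<sigma> * x)"
    using \<sigma> unfolding distributed_def by simp
  have "cdf (density lborel (normal_density 0 \<sigma>)) x = measure std_normal_distribution ((\<lambda>y. \<sigma> * y) -` {..x} \<inter> space std_normal_distribution)"
    unfolding cdf_def eq by (subst measure_distr) auto
  also have "(\<lambda>y. \<sigma> * y) -` {..x} \<inter> space std_normal_distribution = {..x / \<sigma>}"
    using \<sigma> by (auto simp: field_simps)
  finally show ?thesis by (simp add: cdf_def2)
qed

lemma deriv_seq:
  assumes D: "(f has_real_derivative D) (at p0)"
    and N: "filterlim (\<lambda>k. real (N k)) at_top sequentially"
  shows "(\<lambda>k. sqrt (real (N k)) * (f (p0 + x / sqrt (real (N k))) - f p0)) \<longlonglongrightarrow> x * D"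
proof (cases "x = 0")
  case True then show ?thesis by simp
next
  case False
  define h where "h k = x / sqrt (real (N k))" for k
  have sN: "filterlim (\<lambda>k. sqrt (real (N k))) at_top sequentially"
    by (rule filterlim_compose[OF sqrt_at_top N])
  have evpos: "eventually (\<lambda>k. 0 < sqrt (real (N k))) sequentially"
    using sN unfolding filterlim_at_top_dense by blast
  have h0: "h \<longlonglongrightarrow> 0"
    unfolding h_def by (intro tendsto_divide_0[OF tendsto_const] filterlim_at_top_imp_at_infinity sN)
  have hnz: "eventually (\<lambda>k. h k \<noteq> 0) sequentially"
    using evpos by eventually_elim (use False in \<open>simp add: h_def\<close>)
  have hat: "filterlim h (at 0) sequentially" by (rule filterlim_atI[OF h0 hnz])
  have "((\<lambda>h. (f (p0 + h) - f p0) / h) \<longlongrightarrow> D) (at 0)" using D unfolding DERIV_def .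
  then have "(\<lambda>k. (f (p0 + h k) - f p0) / h k) \<longlonglongrightarrow> D"
    by (rule filterlim_compose[OF _ hat])
  then have "(\<lambda>k. x * ((f (p0 + h k) - f p0) / h k)) \<longlonglongrightarrow> x * D" by (intro tendsto_intros)
  moreover have "eventually (\<lambda>k. x * ((f (p0 + h k) - f p0) / h k) = sqrt (real (N k)) * (f (p0 + x / sqrt (real (N k))) - f p0)) sequentially"
    using evpos by eventually_elim (use False in \<open>simp add: h_def field_simps\<close>)
  ultimately show ?thesis by (rule Lim_transform_eventually)
qed


theorem theorem3:
  fixes m :: nat and G :: "real measure" and t :: real
    and nr :: "nat \<Rightarrow> nat \<Rightarrow> nat"
    and lam :: "nat \<Rightarrow> real"
    and M :: "nat \<Rightarrow> 'a measure"
    and Y :: "nat \<Rightarrow> nat \<Rightarrow> nat \<Rightarrow> 'a \<Rightarrow> real"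
    and Fml :: "nat \<Rightarrow> 'a \<Rightarrow> real"
  assumes m: "m \<ge> 1"
    and G: "real_distribution G"
    and Ft: "0 < cdf G t" "cdf G t < 1"
    and M: "\<And>k. prob_space (M k)"
    and indep: "\<And>k. prob_space.indep_vars (M k) (\<lambda>_. borel) (\<lambda>(r, j). Y k r j)
                        {(r, j). r \<in> {1..m} \<and> j < nr k r}"
    and law: "\<And>k r j y. r \<in> {1..m} \<Longrightarrow> j < nr k r \<Longrightarrow>
                 measure (M k) {\<omega> \<in> space (M k). Y k r j \<omega> \<le> y} = Bmix m r (cdf G y)"
    and Fml_meas: "\<And>k. Fml k \<in> borel_measurable (M k)"
    and Fml_range: "\<And>k \<omega>. \<omega> \<in> space (M k) \<Longrightarrow> Fml k \<omega> \<in> {0..1}"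
    and Fml_max: "\<And>k \<omega> p. \<omega> \<in> space (M k) \<Longrightarrow> p \<in> {0..1} \<Longrightarrow>
         minpns_lik m (nr k) (\<lambda>r. \<Sum>j<nr k r. if Y k r j \<omega> \<le> t then 1 else 0) p
       \<le> minpns_lik m (nr k) (\<lambda>r. \<Sum>j<nr k r. if Y k r j \<omega> \<le> t then 1 else 0) (Fml k \<omega>)"
    and n_inf: "\<And>r. r \<in> {1..m} \<Longrightarrow> filterlim (\<lambda>k. nr k r) at_top sequentially"
    and lam_lim: "\<And>r. r \<in> {1..m} \<Longrightarrow>
         (\<lambda>k. real (nr k r) / real (\<Sum>s = 1..m. nr k s)) \<longlonglongrightarrow> lam r"
    and lam_range: "\<And>r. r \<in> {1..m} \<Longrightarrow> 0 < lam r \<and> lam r < 1"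
    and lam_sum: "(\<Sum>r = 1..m. lam r) = 1"
  shows "weak_conv_m
           (\<lambda>k. distr (M k) borel
                  (\<lambda>\<omega>. sqrt (real (\<Sum>s = 1..m. nr k s)) * (Fml k \<omega> - cdf G t)))
           (density lborel (normal_density 0 (sqrt (sigma_ml_sq m lam (cdf G t)))))"
proof -
  define p0 where "p0 = cdf G t"
  have p0: "0 < p0" "p0 < 1" using Ft by (simp_all add: p0_def)
  interpret Gd: real_distribution G by (rule G)
  have B1: "Bmix m r 1 \<le> 1" if r: "r \<in> {1..m}" for r
  proof -
    have "eventually (\<lambda>k. 1 \<le> nr k r) sequentially"
      using n_inf[OF r] unfolding filterlim_at_top by blast
    then obtain k0 where k0: "1 \<le> nr k0 r" unfolding eventually_sequentially by blast
    have le: "Bmix m r (cdf G y) \<le> 1" for y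
    proof -
      interpret Mk: prob_space "M k0" by (rule M)
      have "Bmix m r (cdf G y) = measure (M k0) {\<omega> \<in> space (M k0). Y k0 r 0 \<omega> \<le> y}"
        using law[OF r, of 0 k0 y] k0 by simp
      also have "\<dots> \<le> 1" by simp
      finally show ?thesis .
    qed
    have lim: "((\<lambda>y. Bmix m r (cdf G y)) \<longlongrightarrow> Bmix m r 1) at_top"
      by (rule continuous_on_tendsto_compose[OF Bmix_cont Gd.cdf_lim_at_top_prob])
         (auto simp: Gd.cdf_nonneg Gd.cdf_bounded_prob)
    show ?thesis by (rule tendsto_upperbound[OF lim]) (auto simp: le)
  qed
  define q where "q r = Bmix m r p0" for r
  have q01: "0 < q r \<and> q r < 1" if "r \<in> {1..m}" for r
    using B01[OF that B1[OF that] p0] unfolding q_def by auto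
  have "mp_setup m t q nr lam M Y"
    by (rule mp_setup.intro[OF m M indep _ q01 n_inf lam_lim lam_range]) (use law in \<open>simp add: q_def p0_def\<close>)
  then interpret S: mp_setup m t q nr lam M Y .
  obtain \<delta> \<eta> where d: "0 < \<delta>" "0 < \<eta>" "0 < p0 - \<delta>" "p0 + \<delta> < 1"
    and gapB: "\<forall>r\<in>{1..m}. Bmix m r (p0 - \<delta>) < Bmix m r p0 - \<eta> \<and> Bmix m r p0 + \<eta> < Bmix m r (p0 + \<delta>)"
    and conc: "\<forall>n y p. (\<forall>r\<in>{1..m}. 0 < n r \<and> \<bar>real (y r) - real (n r) * Bmix m r p0\<bar> \<le> \<eta> * real (n r))
          \<longrightarrow> \<bar>p - p0\<bar> \<le> \<delta> \<longrightarrow> score' m n y p < 0"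
    using local_concave[OF m p0 B1] by blast
  define I where "I = (\<Sum>r=1..m. lam r * (bmix m r p0)\<^sup>2 / (q r * (1 - q r)))"
  have Ipos: "0 < I"
  proof -
    have "0 < (\<Sum>r=1..m. lam r * (bmix m r p0)\<^sup>2 / (q r * (1 - q r)))"
    proof (intro sum_pos)
      fix r assume r: "r \<in> {1..m}"
      have "0 < bmix m r p0" using r p0 by (intro bmix_pos) auto
      then show "0 < lam r * (bmix m r p0)\<^sup>2 / (q r * (1 - q r))"
        using lam_range[OF r] q01[OF r] by simp
    qed (use m in auto)
    then show ?thesis unfolding I_def .
  qed
  define s where "s = sqrt I"
  have spos: "0 < s" unfolding s_def using Ipos by simp
  have ss: "s * s = I" unfolding s_def using Ipos by simp
  have sig: "sqrt (sigma_ml_sq m lam (cdf G t)) = 1 / s"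
    unfolding sigma_ml_sq_def s_def I_def q_def p0_def by (simp add: real_sqrt_inverse divide_inverse)
  define \<alpha> where "\<alpha> r = gfun m r p0" for r
  have s_alt: "s = sqrt (\<Sum>r=1..m. (\<alpha> r)\<^sup>2 * lam r * (q r * (1 - q r)))"
  proof -
    have "(\<Sum>r=1..m. (\<alpha> r)\<^sup>2 * lam r * (q r * (1 - q r))) = I"
      unfolding I_def
    proof (rule sum.cong[OF refl])
      fix r assume r: "r \<in> {1..m}"
      have D: "q r * (1 - q r) \<noteq> 0" using q01[OF r] by simp
      have aux: "\<And>b D l. D \<noteq> 0 \<Longrightarrow> (b / D)\<^sup>2 * l * D = l * b\<^sup>2 / (D::real)"
        by (simp add: power2_eq_square field_simps)
      show "(\<alpha> r)\<^sup>2 * lam r * (q r * (1 - q r)) = lam r * (bmix m r p0)\<^sup>2 / (q r * (1 - q r))"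
        unfolding \<alpha>_def gfun_def q_def[symmetric] by (rule aux[OF D])
    qed
    then show ?thesis unfolding s_def by simp
  qed
  have Iab: "(\<Sum>r=1..m. \<alpha> r * lam r * bmix m r p0) = I"
    unfolding I_def
  proof (rule sum.cong[OF refl])
    fix r assume r: "r \<in> {1..m}"
    have aux: "\<And>b D l. (b / D) * l * b = l * b\<^sup>2 / (D::real)"
      by (simp add: power2_eq_square field_simps)
    show "\<alpha> r * lam r * bmix m r p0 = lam r * (bmix m r p0)\<^sup>2 / (q r * (1 - q r))"
      unfolding \<alpha>_def gfun_def q_def[symmetric] by (rule aux)
  qed

  have sig_pos: "0 < 1 / s" using spos by simp
  have lam_lim': "(\<lambda>k. real (nr k r) / real (S.N k)) \<longlonglongrightarrow> lam r" if "r \<in> {1..m}" for r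
    using lam_lim[OF that] unfolding S.N_def .
  show ?thesis
    unfolding weak_conv_m_def weak_conv_def sig
  proof (intro allI impI)
    fix x :: real
    have target: "cdf (density lborel (normal_density 0 (1 / s))) x = Phi (x * s)"
      using normal_cdf_scale[OF sig_pos, of x] spos by simp
    define Z where "Z k \<omega> = sqrt (real (S.N k)) * (Fml k \<omega> - p0)" for k \<omega>
    have cdfZ: "cdf (distr (M k) borel (\<lambda>\<omega>. sqrt (real (\<Sum>s = 1..m. nr k s)) * (Fml k \<omega> - cdf G t))) x
        = measure (M k) {\<omega> \<in> space (M k). Z k \<omega> \<le> x}" for k
      unfolding cdf_def Z_def S.N_def p0_def using Fml_meas[of k]
      by (subst measure_distr) (auto intro!: arg_cong[where f="measure (M k)"])
    define pk where "pk k = p0 + x / sqrt (real (S.N k))" for k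
    have sN: "filterlim (\<lambda>k. sqrt (real (S.N k))) at_top sequentially"
      by (rule filterlim_compose[OF sqrt_at_top S.N_inf])
    have pk: "pk \<longlonglongrightarrow> p0"
    proof -
      have "(\<lambda>k. x / sqrt (real (S.N k))) \<longlonglongrightarrow> 0"
        by (intro tendsto_divide_0[OF tendsto_const] filterlim_at_top_imp_at_infinity sN)
      then have "(\<lambda>k. p0 + x / sqrt (real (S.N k))) \<longlonglongrightarrow> p0 + 0" by (intro tendsto_intros)
      then show ?thesis unfolding pk_def by simp
    qed
    define a where "a k r = gfun m r (pk k)" for k r
    have a: "(\<lambda>k. a k r) \<longlonglongrightarrow> \<alpha> r" if r: "r \<in> {1..m}" for r
    proof -
      have b: "0 < Bmix m r p0" "Bmix m r p0 < 1" using q01[OF r] unfolding q_def by auto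
      show ?thesis unfolding a_def \<alpha>_def by (rule isCont_tendsto_compose[OF gfun_isCont[OF p0 b] pk])
    qed
    define W where "W k \<omega> = (\<Sum>r=1..m. a k r * (S.S k r \<omega> - real (nr k r) * q r) * (1 / (sqrt (real (S.N k)) * s)))" for k \<omega>
    have wc: "weak_conv_m (\<lambda>k. distr (M k) borel (W k)) std_normal_distribution"
      unfolding W_def[abs_def] by (rule S.clt[OF a s_alt spos])
    have Wm: "W k \<in> borel_measurable (M k)" for k
      unfolding W_def[abs_def] by (intro borel_measurable_sum) (auto intro: S.S_meas)
    define ck where "ck k = (\<Sum>r=1..m. a k r * (real (nr k r) * (Bmix m r (pk k) - q r)) * (1 / (sqrt (real (S.N k)) * s)))" for k
    have ck: "ck \<longlonglongrightarrow> x * s"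
    proof -
      have lim: "(\<lambda>k. \<Sum>r=1..m. a k r * (real (nr k r) / real (S.N k)) *
            (sqrt (real (S.N k)) * (Bmix m r (p0 + x / sqrt (real (S.N k))) - Bmix m r p0)) / s)
          \<longlonglongrightarrow> (\<Sum>r=1..m. \<alpha> r * lam r * (x * bmix m r p0) / s)"
        by (intro tendsto_intros a lam_lim' deriv_seq[OF Bmix_deriv[OF p0] S.N_inf]) (use spos in auto)
      have "eventually (\<lambda>k. (\<Sum>r=1..m. a k r * (real (nr k r) / real (S.N k)) *
            (sqrt (real (S.N k)) * (Bmix m r (p0 + x / sqrt (real (S.N k))) - Bmix m r p0)) / s) = ck k) sequentially"
        using S.ev_N_pos
      proof eventually_elim
        case (elim k)
        have sq: "real (S.N k) / sqrt (real (S.N k)) = sqrt (real (S.N k))" by (simp add: real_div_sqrt)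
        show ?case unfolding ck_def pk_def q_def
        proof (rule sum.cong[OF refl])
          fix r
          have aux: "\<And>Nq a n d. 0 < Nq \<Longrightarrow> a * (n / (Nq * Nq)) * (Nq * d) / s = a * (n * d) * (1 / (Nq * s))"
            using spos by (simp add: field_simps)
          have NN: "real (S.N k) = sqrt (real (S.N k)) * sqrt (real (S.N k))" by simp
          show "a k r * (real (nr k r) / real (S.N k)) * (sqrt (real (S.N k)) * (Bmix m r (p0 + x / sqrt (real (S.N k))) - Bmix m r p0)) / s
              = a k r * (real (nr k r) * (Bmix m r (p0 + x / sqrt (real (S.N k))) - Bmix m r p0)) * (1 / (sqrt (real (S.N k)) * s))"
            apply (subst (1) NN)
            using elim by (intro aux) simp
        qed
      qed
      with lim have "ck \<longlonglongrightarrow> (\<Sum>r=1..m. \<alpha> r * lam r * (x * bmix m r p0) / s)"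
        by (rule Lim_transform_eventually)
      also have "(\<Sum>r=1..m. \<alpha> r * lam r * (x * bmix m r p0) / s) = x / s * (\<Sum>r=1..m. \<alpha> r * lam r * bmix m r p0)"
        by (simp add: sum_distrib_left algebra_simps)
      also have "\<dots> = x * s" unfolding Iab using spos ss[symmetric] by (simp add: field_simps)
      finally show ?thesis .
    qed
    have P1: "(\<lambda>k. measure (M k) {\<omega> \<in> space (M k). W k \<omega> \<le> ck k}) \<longlonglongrightarrow> Phi (x * s)"
      by (rule wc_prob(1)[OF M wc Wm ck])
    have P2: "(\<lambda>k. measure (M k) {\<omega> \<in> space (M k). W k \<omega> < ck k}) \<longlonglongrightarrow> Phi (x * s)"
      by (rule wc_prob(2)[OF M wc Wm ck])
    define Bad where "Bad k = (\<Union>r\<in>{1..m}. {\<omega> \<in> space (M k). \<eta> * real (nr k r) < \<bar>S.S k r \<omega> - real (nr k r) * q r\<bar>})" for k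
    have Bad_sets: "Bad k \<in> sets (M k)" for k
      unfolding Bad_def by (intro sets.finite_UN) (auto intro: S.S_meas)
    have Bad0: "(\<lambda>k. measure (M k) (Bad k)) \<longlonglongrightarrow> 0"
    proof -
      have ev_lam: "eventually (\<lambda>k. \<forall>r\<in>{1..m}. lam r / 2 * real (S.N k) \<le> real (nr k r)) sequentially"
      proof (subst eventually_ball_finite_distrib, simp, intro ballI)
        fix r assume r: "r \<in> {1..m}"
        have "eventually (\<lambda>k. lam r / 2 < real (nr k r) / real (S.N k)) sequentially"
          by (rule order_tendstoD(1)[OF lam_lim'[OF r]]) (use lam_range[OF r] in simp)
        then show "eventually (\<lambda>k. lam r / 2 * real (S.N k) \<le> real (nr k r)) sequentially"
          using S.ev_N_pos by eventually_elim (simp add: pos_less_divide_eq less_imp_le)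
      qed
      define E where "E k r = {\<omega> \<in> space (M k). \<eta> * lam r / 2 * real (S.N k) \<le> \<bar>S.S k r \<omega> - real (nr k r) * q r\<bar>}" for k r
      have Em: "E k r \<in> sets (M k)" if "r \<in> {1..m}" for k r
        unfolding E_def using S.S_meas[OF that, of k] by measurable
      have El: "(\<lambda>k. measure (M k) (E k r)) \<longlonglongrightarrow> 0" if r: "r \<in> {1..m}" for r
        unfolding E_def by (rule S.lln[OF r]) (use d lam_range[OF r] in simp)
      have sl: "(\<lambda>k. \<Sum>r=1..m. measure (M k) (E k r)) \<longlonglongrightarrow> 0"
        by (rule tendsto_null_sum) (use El in auto)
      have ev_le: "eventually (\<lambda>k. measure (M k) (Bad k) \<le> (\<Sum>r=1..m. measure (M k) (E k r))) sequentially"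
        using ev_lam
      proof eventually_elim
        case (elim k)
        have sub: "Bad k \<subseteq> (\<Union>r\<in>{1..m}. E k r)"
        proof
          fix \<omega> assume "\<omega> \<in> Bad k"
          then obtain r where r: "r \<in> {1..m}" "\<omega> \<in> space (M k)"
            and lt: "\<eta> * real (nr k r) < \<bar>S.S k r \<omega> - real (nr k r) * q r\<bar>" unfolding Bad_def by auto
          have "\<eta> * lam r / 2 * real (S.N k) = \<eta> * (lam r / 2 * real (S.N k))" by simp
          also have "\<dots> \<le> \<eta> * real (nr k r)" using elim r d by (intro mult_left_mono) auto
          finally have "\<eta> * lam r / 2 * real (S.N k) \<le> \<bar>S.S k r \<omega> - real (nr k r) * q r\<bar>" using lt by simp
          then show "\<omega> \<in> (\<Union>r\<in>{1..m}. E k r)" using r unfolding E_def by auto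
        qed
        interpret Mk: prob_space "M k" by (rule M)
        have "measure (M k) (Bad k) \<le> measure (M k) (\<Union>r\<in>{1..m}. E k r)"
          using sub Em by (intro Mk.finite_measure_mono) auto
        also have "\<dots> \<le> (\<Sum>r=1..m. measure (M k) (E k r))"
          using Em by (intro measure_UNION_le) auto
        finally show ?case .
      qed
      show ?thesis
        by (rule tendsto_sandwich[OF _ ev_le tendsto_const sl]) simp
    qed
    have evk: "eventually (\<lambda>k. 0 < S.N k \<and> (\<forall>r\<in>{1..m}. 0 < nr k r) \<and> \<bar>pk k - p0\<bar> < \<delta>) sequentially"
    proof -
      have e2: "eventually (\<lambda>k. \<forall>r\<in>{1..m}. 0 < nr k r) sequentially"
      proof (subst eventually_ball_finite_distrib, simp, intro ballI)
        fix r assume r: "r \<in> {1..m}"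
        have "eventually (\<lambda>k. 1 \<le> nr k r) sequentially"
          using n_inf[OF r] unfolding filterlim_at_top by blast
        then show "eventually (\<lambda>k. 0 < nr k r) sequentially" by eventually_elim auto
      qed
      have e3: "eventually (\<lambda>k. dist (pk k) p0 < \<delta>) sequentially"
        by (rule tendstoD[OF pk]) (use d in simp)
      show ?thesis using S.ev_N_pos e2 e3 by eventually_elim (auto simp: dist_real_def)
    qed
    have incl: "eventually (\<lambda>k. {\<omega> \<in> space (M k). Z k \<omega> \<le> x} \<subseteq> {\<omega> \<in> space (M k). W k \<omega> \<le> ck k} \<union> Bad k
        \<and> {\<omega> \<in> space (M k). W k \<omega> < ck k} \<subseteq> {\<omega> \<in> space (M k). Z k \<omega> \<le> x} \<union> Bad k) sequentially"
      using evk
    proof eventually_elim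
      case (elim k)
      have Npos: "0 < sqrt (real (S.N k))" using elim by simp
      have claim: "(W k \<omega> < ck k \<longrightarrow> Z k \<omega> \<le> x) \<and> (Z k \<omega> \<le> x \<longrightarrow> W k \<omega> \<le> ck k)"
        if \<omega>: "\<omega> \<in> space (M k)" "\<omega> \<notin> Bad k" for \<omega>
      proof -
        define yv where "yv = (\<lambda>r. \<Sum>j<nr k r. if Y k r j \<omega> \<le> t then 1 else (0::nat))"
        have Fmax: "minpns_lik m (nr k) yv p \<le> minpns_lik m (nr k) yv (Fml k \<omega>)" if "0 \<le> p" "p \<le> 1" for p
          using Fml_max[OF \<omega>(1), of p] that unfolding yv_def by auto
        have yvS: "real (yv r) = S.S k r \<omega>" for r
          unfolding yv_def S.S_def S.X_def of_nat_sum by (rule sum.cong) auto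
        have yvn: "yv r \<le> nr k r" for r
        proof -
          show ?thesis
            using sum_bounded_above[of "{..<nr k r}" "\<lambda>j. if Y k r j \<omega> \<le> t then 1 else (0::nat)" 1]
            unfolding yv_def by auto
        qed
        have good: "0 < nr k r \<and> yv r \<le> nr k r \<and> \<bar>real (yv r) - real (nr k r) * Bmix m r p0\<bar> \<le> \<eta> * real (nr k r)"
          if r: "r \<in> {1..m}" for r
        proof -
          have "\<not> \<eta> * real (nr k r) < \<bar>S.S k r \<omega> - real (nr k r) * q r\<bar>"
            using \<omega> r unfolding Bad_def by auto
          then show ?thesis using elim r yvn[of r] unfolding yvS q_def by auto
        qed
        have conc': "score' m (nr k) yv p < 0" if "\<bar>p - p0\<bar> \<le> \<delta>" for p
          using conc good that by blast
        have gapB': "Bmix m r (p0 - \<delta>) < Bmix m r p0 - \<eta> \<and> Bmix m r p0 + \<eta> < Bmix m r (p0 + \<delta>)"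
          if "r \<in> {1..m}" for r using gapB that by blast
        have F: "0 \<le> Fml k \<omega>" "Fml k \<omega> \<le> 1" using Fml_range[OF \<omega>(1)] by auto
        have p1: "\<bar>pk k - p0\<bar> < \<delta>" using elim by simp
        have AS1: "Fml k \<omega> \<le> pk k" if "score m (nr k) yv (pk k) < 0"
          by (rule argmax_score(1)[OF m B1 d(1) d(3) d(4) gapB' conc' good p1 F Fmax that])
        have AS2: "score m (nr k) yv (pk k) \<le> 0" if "Fml k \<omega> \<le> pk k"
          by (rule argmax_score(2)[OF m B1 d(1) d(3) d(4) gapB' conc' good p1 F Fmax that])
        have diff: "W k \<omega> - ck k = score m (nr k) yv (pk k) * (1 / (sqrt (real (S.N k)) * s))"
        proof -
          have "W k \<omega> - ck k = (\<Sum>r=1..m. gfun m r (pk k) * (S.S k r \<omega> - real (nr k r) * Bmix m r (pk k)) * (1 / (sqrt (real (S.N k)) * s)))"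
            unfolding W_def ck_def a_def sum_subtractf[symmetric] by (rule sum.cong) (simp_all add: algebra_simps)
          also have "\<dots> = (\<Sum>r=1..m. gfun m r (pk k) * (S.S k r \<omega> - real (nr k r) * Bmix m r (pk k))) * (1 / (sqrt (real (S.N k)) * s))"
            by (simp add: sum_divide_distrib)
          finally show ?thesis unfolding score_def yvS .
        qed
        have c: "0 < 1 / (sqrt (real (S.N k)) * s)" using Npos spos by simp
        have Zeq: "Z k \<omega> \<le> x \<longleftrightarrow> Fml k \<omega> \<le> pk k"
          unfolding Z_def pk_def using Npos by (simp add: field_simps)
        show ?thesis
        proof (intro conjI impI)
          assume "W k \<omega> < ck k"
          then have "score m (nr k) yv (pk k) * (1 / (sqrt (real (S.N k)) * s)) < 0" using diff by simp
          then have "score m (nr k) yv (pk k) < 0" using c by (simp add: divide_less_0_iff)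
          then show "Z k \<omega> \<le> x" using AS1 Zeq by auto
        next
          assume "Z k \<omega> \<le> x"
          then have "score m (nr k) yv (pk k) \<le> 0" using AS2 Zeq by auto
          then have "score m (nr k) yv (pk k) * (1 / (sqrt (real (S.N k)) * s)) \<le> 0"
            using c by (simp add: divide_le_0_iff)
          then show "W k \<omega> \<le> ck k" using diff by simp
        qed
      qed
      show ?case using claim by auto
    qed
    have Zm: "{\<omega> \<in> space (M k). Z k \<omega> \<le> x} \<in> sets (M k)" for k
      unfolding Z_def using Fml_meas[of k] by measurable
    have W1m: "{\<omega> \<in> space (M k). W k \<omega> \<le> ck k} \<in> sets (M k)" for k
      using Wm[of k] by measurable
    have W2m: "{\<omega> \<in> space (M k). W k \<omega> < ck k} \<in> sets (M k)" for k
      using Wm[of k] by measurable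
    have up: "eventually (\<lambda>k. measure (M k) {\<omega> \<in> space (M k). Z k \<omega> \<le> x}
        \<le> measure (M k) {\<omega> \<in> space (M k). W k \<omega> \<le> ck k} + measure (M k) (Bad k)) sequentially"
      using incl
    proof eventually_elim
      case (elim k)
      interpret Mk: prob_space "M k" by (rule M)
      have "measure (M k) {\<omega> \<in> space (M k). Z k \<omega> \<le> x} \<le> measure (M k) ({\<omega> \<in> space (M k). W k \<omega> \<le> ck k} \<union> Bad k)"
        using elim W1m Bad_sets by (intro Mk.finite_measure_mono) auto
      also have "\<dots> \<le> measure (M k) {\<omega> \<in> space (M k). W k \<omega> \<le> ck k} + measure (M k) (Bad k)"
        using W1m Bad_sets by (intro measure_subadditive) auto
      finally show ?case .
    qed
    have lo: "eventually (\<lambda>k. measure (M k) {\<omega> \<in> space (M k). W k \<omega> < ck k} - measure (M k) (Bad k)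
        \<le> measure (M k) {\<omega> \<in> space (M k). Z k \<omega> \<le> x}) sequentially"
      using incl
    proof eventually_elim
      case (elim k)
      interpret Mk: prob_space "M k" by (rule M)
      have "measure (M k) {\<omega> \<in> space (M k). W k \<omega> < ck k} \<le> measure (M k) ({\<omega> \<in> space (M k). Z k \<omega> \<le> x} \<union> Bad k)"
        using elim Zm Bad_sets by (intro Mk.finite_measure_mono) auto
      also have "\<dots> \<le> measure (M k) {\<omega> \<in> space (M k). Z k \<omega> \<le> x} + measure (M k) (Bad k)"
        using Zm Bad_sets by (intro measure_subadditive) auto
      finally show ?case by simp
    qed
    have "(\<lambda>k. measure (M k) {\<omega> \<in> space (M k). Z k \<omega> \<le> x}) \<longlonglongrightarrow> Phi (x * s)"
    proof (rule tendsto_sandwich[OF lo up])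
      show "(\<lambda>k. measure (M k) {\<omega> \<in> space (M k). W k \<omega> < ck k} - measure (M k) (Bad k)) \<longlonglongrightarrow> Phi (x * s)"
        using tendsto_diff[OF P2 Bad0] by simp
      show "(\<lambda>k. measure (M k) {\<omega> \<in> space (M k). W k \<omega> \<le> ck k} + measure (M k) (Bad k)) \<longlonglongrightarrow> Phi (x * s)"
        using tendsto_add[OF P1 Bad0] by simp
    qed
    then show "(\<lambda>k. cdf (distr (M k) borel (\<lambda>\<omega>. sqrt (real (\<Sum>s = 1..m. nr k s)) * (Fml k \<omega> - cdf G t))) x)
        \<longlonglongrightarrow> cdf (density lborel (normal_density 0 (1 / s))) x"
      unfolding cdfZ target .
  qed
qed


end
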